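(* With $\Xi$ as defined in the context: (1) $\|H^0f\|\ge7\|f\|$ for every $f$ in the domain of $H^0$ in $L^2_{K,1}$ with $P_\Xi f=0$, and $7$ is the largest constant with this property; (2) for every real $\alpha$, $\psi^{8,\alpha}=\sum_{n=0}^8\alpha^n\Psi^n$ lies in $\mathrm{ran}P_\Xi$; (3) $\|P_\Xi H^1P_\Xi^\perp\|_{L^2_{K,1}\to L^2_{K,1}}=1$, hence $\|Q^{\alpha,\perp}P_\Xi H^1P_\Xi^\perp\|\le1$ for every orthogonal projection $Q^{\alpha,\perp}$.
   Context: Let $\phi=2\pi/3$. Moiré lattice $\Lambda=\mathbb Z\vec a_1+\mathbb Z\vec a_2$ with $\vec a_1=\frac{2\pi}{3}(\sqrt3,1)$, $\vec a_2=\frac{2\pi}{3}(-\sqrt3,1)$; reciprocal lattice $\Lambda^*=\mathbb Z\vec b_1+\mathbb Z\vec b_2$, $\vec b_1=\frac12(\sqrt3,3)$, $\vec b_2=\frac12(-\sqrt3,3)$; $\vec q_1=(0,-1)$, $\vec q_2=\vec q_1+\vec b_1$, $\vec q_3=\vec q_1+\vec b_2$. $\Omega$ a fundamental cell of $\Lambda$, $V$ its area. $U(\vec r)=e^{-i\vec q_1\cdot\vec r}+e^{i\phi}e^{-i\vec q_2\cdot\vec r}+e^{-i\phi}e^{-i\vec q_3\cdot\vec r}$, $\bar\partial=\frac12(\partial_x+i\partial_y)$, $D^\alpha=\begin{pmatrix}-2i\bar\partial&\alpha U(\vec r)\\ \alpha U(-\vec r)&-2i\bar\partial\end{pmatrix}$,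 $H^\alpha=\begin{pmatrix}0&(D^\alpha)^\dagger\\ D^\alpha&0\end{pmatrix}=H^0+\alpha H^1$. $L^2_K$: functions $f\in L^2_{loc}(\mathbb R^2;\mathbb C^4)$ with $f(\vec r+\vec v)=\mathrm{diag}(1,e^{i\vec q_1\cdot\vec v},1,e^{i\vec q_1\cdot\vec v})f(\vec r)$ for all $\vec v\in\Lambda$, inner product $\int_\Omega f^\dagger g$. $R_\phi$ counterclockwise rotation by $\phi$, $R_\phi^T$ its transpose (clockwise rotation), $(\mathcal Rf)(\vec r)=\mathrm{diag}(1,1,e^{-i\phi},e^{-i\phi})f(R_\phi\vec r)$, $L^2_{K,1}=\{f\in L^2_K:\mathcal Rf=f\}$. $e_j$ standard basis vectors of $\mathbb C^4$. Chiral basis: for $\vec k\ne0$ let $\hat z_{\vec k}=(k_1+ik_2)/|\vec k|$. For $\vec G\in\Lambda^*\setminus\{0\}$ set $\chi^{\widetilde{\vec G},+1}(\vec r)=(3V)^{-1/2}e_1\sum_{k=0}^2e^{i((R_\phi^T)^k\vec G)\cdot\vec r}$ and $\chi^{\widetilde{\vec G},-1}(\vec r)=(3V)^{-1/2}e_3\sum_{k=0}^2\hat z_{(R_\phi^T)^k\vec G}e^{i((R_\phi^T)^k\vec G)\cdot\vec r}$; for $\vec G\in\Lambda^*$ define $\chi^{\widetilde{\vec q_1+\vec G},\pm1}$ by the same formulas with $\vec G$ replaced by $\vec q_1+\vec G$ and $e_1,e_3$ replaced by $e_2,e_4$. These depend only on the orbit of the index under $R_\phi^T$; together with $\chi^{\widetilde{\vec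 0}}=V^{-1/2}e_1$ (one function per orbit and sign) they form an orthonormal basis of $L^2_{K,1}$, with $H^0\chi^{\widetilde{\vec p},\pm1}=|\vec p|\chi^{\widetilde{\vec p},\mp1}$. $\Xi$ is the set consisting of $\chi^{\widetilde{\vec0}}$, all $\chi^{\widetilde{\vec p},\pm1}$ with $\vec p\in(\Lambda^*\setminus\{0\})\cup(\vec q_1+\Lambda^* )$ and $|\vec p|\le4\sqrt3$, and the four functions $\chi^{\widetilde{\vec q_1-4\vec b_1+\vec b_2},\pm1}$, $\chi^{\widetilde{\vec q_1+\vec b_1-4\vec b_2},\pm1}$. $P_\Xi$ is the orthogonal projection onto $\mathrm{span}\,\Xi$, $P_\Xi^\perp=I-P_\Xi$. $\Psi^0=V^{-1/2}e_1$; $P$ orthogonal projection onto $\Psi^0$ in $L^2_{K,1}$, $P^\perp=I-P$, $P^\perp(H^0)^{-1}P^\perp$ the inverse of $H^0$ on $\mathrm{ran}P^\perp$ extended by $0$; $\Psi^n=-P^\perp(H^0)^{-1}P^\perp H^1\Psi^{n-1}$. *)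

theory Defs
  imports "HOL-Analysis.Analysis"
begin

text \<open>
  Points of the plane are complex numbers (x,y) = x + iy, so the dot product is
  p . r = Re (cnj p * r), the counterclockwise rotation R_phi is multiplication by cis phi,
  and its transpose is multiplication by cis (-phi).
  An element f of L2_K is represented by its Fourier coefficients:
  f_j(r) = sum over p of c j p * exp (i p.r), components j = 0,1,2,3 (standing for e_1..e_4).
  The quasi-periodicity of L2_K forces the frequencies of components 0,2 to lie in the
  reciprocal lattice and those of components 1,3 in q1 + reciprocal lattice.
  By Parseval, the inner product int_Omega f^dagger g equals V * sum conj(c) * d.
\<close>

type_synonym coeff = "nat \<Rightarrow> complex \<Rightarrow> complex"

definition phi :: real where "phi = 2 * pi / 3"

definition a1 :: complex where "a1 = of_real (2 * pi / 3) * Complex (sqrt 3) 1"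
definition a2 :: complex where "a2 = of_real (2 * pi / 3) * Complex (- sqrt 3) 1"

definition Vol :: real where "Vol = \<bar>Im (cnj a1 * a2)\<bar>"

definition b1 :: complex where "b1 = Complex (sqrt 3 / 2) (3 / 2)"
definition b2 :: complex where "b2 = Complex (- sqrt 3 / 2) (3 / 2)"

definition q1 :: complex where "q1 = Complex 0 (-1)"
definition q2 :: complex where "q2 = q1 + b1"
definition q3 :: complex where "q3 = q1 + b2"

definition LamStar :: "complex set" where
  "LamStar = {of_int m * b1 + of_int n * b2 | m n. True}"

definition freq :: "nat \<Rightarrow> complex set" where
  "freq j = (if even j then LamStar else (\<lambda>g. q1 + g) ` LamStar)"

definition L2K :: "coeff set" where
  "L2K = {c. (\<forall>j p. c j p \<noteq> 0 \<longrightarrow> j < 4 \<and> p \<in> freq j) \<and>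
             (\<lambda>(j, p). (cmod (c j p))\<^sup>2) summable_on UNIV}"

definition inner_K :: "coeff \<Rightarrow> coeff \<Rightarrow> complex" where
  "inner_K c d = of_real Vol * (\<Sum>\<^sub>\<infinity>(j, p). cnj (c j p) * d j p)"

definition nrm :: "coeff \<Rightarrow> real" where
  "nrm c = sqrt (Vol * (\<Sum>\<^sub>\<infinity>(j, p). (cmod (c j p))\<^sup>2))"

definition smult :: "complex \<Rightarrow> coeff \<Rightarrow> coeff" where
  "smult a c = (\<lambda>j p. a * c j p)"

text \<open>The rotation operator (Rf)(r) = diag(1,1,e^{-i phi},e^{-i phi}) f(R_phi r):
  the coefficient of exp(i k.r) is the old coefficient at R_phi k.\<close>
definition Rot :: "coeff \<Rightarrow> coeff" where
  "Rot c = (\<lambda>j p. (if 2 \<le> j then cis (- phi) else 1) * c j (cis phi * p))"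

definition L2K1 :: "coeff set" where
  "L2K1 = {c \<in> L2K. Rot c = c}"

text \<open>H^0: -2i dbar acts on exp(i p.r) as multiplication by p1 + i p2 = p.\<close>
definition H0 :: "coeff \<Rightarrow> coeff" where
  "H0 c = (\<lambda>j p. if j = 0 then cnj p * c 2 p
                 else if j = 1 then cnj p * c 3 p
                 else if j = 2 then p * c 0 p
                 else if j = 3 then p * c 1 p else 0)"

definition domH0 :: "coeff set" where
  "domH0 = {c \<in> L2K1. (\<lambda>(j, p). (cmod p * cmod (c j p))\<^sup>2) summable_on UNIV}"

definition qv :: "nat \<Rightarrow> complex" where "qv k = [q1, q2, q3] ! k"
definition wv :: "nat \<Rightarrow> complex" where "wv k = [1, cis phi, cis (- phi)] ! k"

text \<open>H^1 = [[0, (D^1)^dagger],[D^1, 0]] with D^1 = [[0, U(r)],[U(-r), 0]],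
  U(r) = sum_k w_k exp(-i q_k.r).  Multiplication by exp(-i q.r) maps the coefficient
  sequence g to p \<mapsto> g (p + q).\<close>
definition H1 :: "coeff \<Rightarrow> coeff" where
  "H1 c = (\<lambda>j p. if j = 0 then (\<Sum>k<3. cnj (wv k) * c 3 (p + qv k))
                 else if j = 1 then (\<Sum>k<3. cnj (wv k) * c 2 (p - qv k))
                 else if j = 2 then (\<Sum>k<3. wv k * c 1 (p + qv k))
                 else if j = 3 then (\<Sum>k<3. wv k * c 0 (p - qv k)) else 0)"

text \<open>The sign +1 is True, -1 is False.\<close>
definition orbit :: "complex \<Rightarrow> complex set" where
  "orbit p = {p, cis (- phi) * p, cis (- 2 * phi) * p}"

definition zhat :: "complex \<Rightarrow> complex" where
  "zhat k = k / of_real (cmod k)"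

definition chi_comp :: "complex \<Rightarrow> bool \<Rightarrow> nat" where
  "chi_comp p s = (if p \<in> LamStar then (if s then 0 else 2) else (if s then 1 else 3))"

definition chi :: "complex \<Rightarrow> bool \<Rightarrow> coeff" where
  "chi p s = (\<lambda>j q. if j = chi_comp p s \<and> q \<in> orbit p
                    then of_real (1 / sqrt (3 * Vol)) * (if s then 1 else zhat q) else 0)"

definition chi0 :: coeff where
  "chi0 = (\<lambda>j q. if j = 0 \<and> q = 0 then of_real (1 / sqrt Vol) else 0)"

definition Xi :: "coeff set" where
  "Xi = {chi0}
     \<union> {chi p s | p s. p \<in> (LamStar - {0}) \<union> (\<lambda>g. q1 + g) ` LamStar \<and> cmod p \<le> 4 * sqrt 3}
     \<union> {chi p s | p s. p \<in> {q1 - 4 * b1 + b2, q1 + b1 - 4 * b2}}"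

definition cspan :: "coeff set \<Rightarrow> coeff set" where
  "cspan X = {c. \<exists>F a. finite F \<and> F \<subseteq> X \<and> c = (\<lambda>j q. \<Sum>x\<in>F. a x * x j q)}"

definition orth_proj :: "coeff set \<Rightarrow> coeff \<Rightarrow> coeff" where
  "orth_proj S c = (THE d. d \<in> S \<and> (\<forall>e\<in>S. inner_K e (c - d) = 0))"

definition PXi :: "coeff \<Rightarrow> coeff" where "PXi = orth_proj (cspan Xi)"
definition PXi_perp :: "coeff \<Rightarrow> coeff" where "PXi_perp c = c - PXi c"

definition Psi0 :: coeff where
  "Psi0 = (\<lambda>j q. if j = 0 \<and> q = 0 then of_real (1 / sqrt Vol) else 0)"

definition P :: "coeff \<Rightarrow> coeff" where "P = orth_proj (cspan {Psi0})"
definition Pperp :: "coeff \<Rightarrow> coeff" where "Pperp c = c - P c"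

definition H0inv_perp :: "coeff \<Rightarrow> coeff" where
  "H0inv_perp c = (THE d. d \<in> domH0 \<and> Pperp d = d \<and> H0 d = c)"

definition pinvH0 :: "coeff \<Rightarrow> coeff" where
  "pinvH0 c = Pperp (H0inv_perp (Pperp c))"

primrec Psi :: "nat \<Rightarrow> coeff" where
  "Psi 0 = Psi0"
| "Psi (Suc n) = - pinvH0 (H1 (Psi n))"

definition psi8 :: "real \<Rightarrow> coeff" where
  "psi8 \<alpha> = (\<lambda>j q. \<Sum>n\<le>8. of_real \<alpha> ^ n * Psi n j q)"

text \<open>Operator norm on L2_{K,1} (extended real, so unboundedness is not hidden).\<close>
definition opnorm :: "(coeff \<Rightarrow> coeff) \<Rightarrow> ereal" where
  "opnorm T = (SUP f\<in>{f \<in> L2K1. nrm f \<le> 1}. ereal (nrm (T f)))"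

definition is_orth_proj :: "(coeff \<Rightarrow> coeff) \<Rightarrow> bool" where
  "is_orth_proj Q \<longleftrightarrow> (\<forall>f\<in>L2K1. Q f \<in> L2K1) \<and> (\<forall>f\<in>L2K1. Q (Q f) = Q f) \<and>
     (\<forall>f\<in>L2K1. \<forall>g\<in>L2K1. inner_K (Q f) g = inner_K f (Q g))"

end

theory Submission
  imports Defs
begin


abbreviation "\<omega> \<equiv> cis phi"

lemma cis_phi: "cis phi = Complex (-1/2) (sqrt 3 / 2)"
  by (simp add: phi_def complex_eq_iff cos_120 sin_120)

lemma cis_mphi: "cis (- phi) = Complex (-1/2) (- sqrt 3 / 2)"
  by (simp add: phi_def complex_eq_iff cos_120 sin_120)

lemma cis_m2phi: "cis (- 2 * phi) = Complex (-1/2) (sqrt 3 / 2)"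
proof -
  have "cis (- 2 * phi) = cis (-phi) * cis (-phi)" by (simp add: cis_mult)
  also have "\<dots> = Complex (-1/2) (sqrt 3 / 2)" by (simp add: cis_mphi complex_eq_iff algebra_simps)
  finally show ?thesis .
qed

definition Lm :: "int \<Rightarrow> int \<Rightarrow> complex" where
  "Lm a b = of_int a * b1 + of_int b * b2"
definition Kp :: "int \<Rightarrow> int \<Rightarrow> complex" where
  "Kp a b = q1 + Lm a b"

lemma Lm_eq: "Lm a b = Complex ((a - b) * sqrt 3 / 2) (3 * (a + b) / 2)"
  by (simp add: Lm_def b1_def b2_def complex_eq_iff algebra_simps)
lemma Kp_eq: "Kp a b = Complex ((a - b) * sqrt 3 / 2) (3 * (a + b) / 2 - 1)"
  by (simp add: Kp_def Lm_eq q1_def complex_eq_iff algebra_simps)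

lemma Lm_norm: "(cmod (Lm a b))^2 = 3 * (a^2 + a*b + b^2)"
  unfolding Lm_eq cmod_power2 complex.sel by (simp add: field_simps power2_eq_square)

lemma Kp_norm: "(cmod (Kp a b))^2 = 3 * (a^2 + a*b + b^2 - a - b) + 1"
  unfolding Kp_eq cmod_power2 complex.sel by (simp add: field_simps power2_eq_square)

lemma Lm_inj: "Lm a b = Lm c d \<longleftrightarrow> a = c \<and> b = d"
  apply (simp add: Lm_eq complex_eq_iff)
  by (smt (verit, del_insts) of_int_eq_iff of_int_add of_int_diff real_sqrt_eq_zero_cancel_iff mult_cancel_right)

lemma Kp_inj: "Kp a b = Kp c d \<longleftrightarrow> a = c \<and> b = d"
  using Lm_inj by (simp add: Kp_def)

lemma Lm_ne_Kp: "Lm a b \<noteq> Kp c d"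
proof
  assume "Lm a b = Kp c d"
  then have "3 * (a + b) / 2 = 3 * (c + d) / 2 - (1::real)" by (simp add: Lm_eq Kp_eq complex_eq_iff)
  then have "3 * (a + b) = 3 * (c + d) - (2::real)" by simp
  then have "3 * (a + b) = 3 * (c + d) - (2::int)" by linarith
  then show False by presburger
qed


lemma cis_m2phi': "cis (- (2 * phi)) = cis phi"
  using cis_m2phi cis_phi by (metis mult_minus_left)

lemma orbit_alt: "orbit p = {p, cis (- phi) * p, cis phi * p}"
  by (simp add: orbit_def cis_m2phi')

lemma rotm_Lm: "cis (- phi) * Lm a b = Lm b (- a - b)"
  by (simp add: cis_mphi Lm_eq complex_eq_iff field_simps)
lemma rotp_Lm: "cis phi * Lm a b = Lm (- a - b) a"
  by (simp add: cis_phi Lm_eq complex_eq_iff field_simps)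
lemma rotm_Kp: "cis (- phi) * Kp a b = Kp b (1 - a - b)"
  by (simp add: cis_mphi Kp_eq complex_eq_iff field_simps)
lemma rotp_Kp: "cis phi * Kp a b = Kp (1 - a - b) a"
  by (simp add: cis_phi Kp_eq complex_eq_iff field_simps)

lemma qv0: "qv 0 = Complex 0 (-1)" by (simp add: qv_def q1_def)
lemma qv1: "qv (Suc 0) = Complex (sqrt 3 / 2) (1/2)" by (simp add: qv_def q2_def q1_def b1_def complex_eq_iff)
lemma qv2: "qv 2 = Complex (- sqrt 3 / 2) (1/2)" by (simp add: qv_def q3_def q1_def b2_def numeral_2_eq_2 complex_eq_iff)

lemma Lm_q0: "Lm a b + qv 0 = Kp a b" by (simp add: Kp_def qv_def)
lemma Lm_q1: "Lm a b + qv 1 = Kp (a + 1) b" by (simp add: Kp_eq Lm_eq qv1 complex_eq_iff field_simps)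
lemma Lm_q2: "Lm a b + qv 2 = Kp a (b + 1)" by (simp add: Kp_eq Lm_eq qv2 complex_eq_iff field_simps)
lemma Kp_q0: "Kp a b - qv 0 = Lm a b" by (simp add: Kp_def qv_def)
lemma Kp_q1: "Kp a b - qv 1 = Lm (a - 1) b" by (simp add: Kp_eq Lm_eq qv1 complex_eq_iff field_simps)
lemma Kp_q2: "Kp a b - qv 2 = Lm a (b - 1)" by (simp add: Kp_eq Lm_eq qv2 complex_eq_iff field_simps)

lemma LamStar_iff: "p \<in> LamStar \<longleftrightarrow> (\<exists>a b. p = Lm a b)"
  by (auto simp: LamStar_def Lm_def)

definition Kset :: "complex set" where "Kset = (\<lambda>g. q1 + g) ` LamStar"

lemma Kset_iff: "p \<in> Kset \<longleftrightarrow> (\<exists>a b. p = Kp a b)"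
  unfolding Kset_def Kp_def using LamStar_iff by (auto simp: image_iff)

lemma freq_even: "even j \<Longrightarrow> freq j = LamStar" by (simp add: freq_def)
lemma freq_odd: "odd j \<Longrightarrow> freq j = Kset" by (simp add: freq_def Kset_def)

lemma Lm_notin_Kset: "Lm a b \<notin> Kset" using Lm_ne_Kp by (auto simp: Kset_iff)
lemma Kp_notin_LamStar: "Kp a b \<notin> LamStar" using Lm_ne_Kp by (metis LamStar_iff)

lemma Vol_pos: "Vol > 0"
proof -
  have "Im (cnj a1 * a2) = (2 * pi / 3)^2 * (2 * sqrt 3)"
    by (simp add: a1_def a2_def field_simps power2_eq_square)
  moreover have "(2 * pi / 3)^2 * (2 * sqrt 3) > 0" by simp
  ultimately show ?thesis by (simp add: Vol_def)
qed

lemma cis_phi_cube: "cis phi * (cis phi * cis phi) = 1"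
  by (simp add: cis_phi complex_eq_iff field_simps power2_eq_square)
lemma cis_mphi_mult: "cis (- phi) * cis phi = 1"
  by (simp add: cis_mult)
lemma cmod_cis_phi: "cmod (cis phi) = 1" by simp


definition supp :: "coeff \<Rightarrow> (nat \<times> complex) set" where
  "supp c = {(j, p). c j p \<noteq> 0}"

lemma supp_outside: "supp c \<subseteq> F \<Longrightarrow> (j, p) \<notin> F \<Longrightarrow> c j p = 0"
  by (auto simp: supp_def subset_iff)

lemma infsum_fin:
  fixes f :: "nat \<times> complex \<Rightarrow> 'b::{comm_monoid_add,t2_space}"
  assumes "finite F" "\<And>x. x \<notin> F \<Longrightarrow> f x = 0"
  shows "infsum f UNIV = sum f F"
proof -
  have "infsum f UNIV = infsum f F"
    by (rule infsum_cong_neutral) (use assms in auto)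
  then show ?thesis using assms by simp
qed

lemma summable_fin:
  fixes f :: "nat \<times> complex \<Rightarrow> 'b::{comm_monoid_add,t2_space}"
  assumes "finite F" "\<And>x. x \<notin> F \<Longrightarrow> f x = 0"
  shows "f summable_on UNIV"
proof -
  have "f summable_on F" using assms by simp
  then show ?thesis
    by (rule summable_on_cong_neutral[THEN iffD1, rotated -1]) (use assms in auto)
qed

lemma nrm_fin:
  assumes "finite F" "supp c \<subseteq> F"
  shows "nrm c = sqrt (Vol * (\<Sum>(j, p)\<in>F. (cmod (c j p))\<^sup>2))"
proof -
  have "(\<Sum>\<^sub>\<infinity>(j, p). (cmod (c j p))\<^sup>2) = (\<Sum>(j, p)\<in>F. (cmod (c j p))\<^sup>2)"
    by (rule infsum_fin) (use assms supp_outside in auto)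
  then show ?thesis by (simp add: nrm_def)
qed

lemma inner_fin:
  assumes "finite F" "supp e \<subseteq> F"
  shows "inner_K e g = of_real Vol * (\<Sum>(j, p)\<in>F. cnj (e j p) * g j p)"
proof -
  have "(\<Sum>\<^sub>\<infinity>(j, p). cnj (e j p) * g j p) = (\<Sum>(j, p)\<in>F. cnj (e j p) * g j p)"
    by (rule infsum_fin) (use assms supp_outside in auto)
  then show ?thesis by (simp add: inner_K_def)
qed

lemma orth_proj_unique:
  assumes dS: "d \<in> S" and orth: "\<forall>e\<in>S. inner_K e (c - d) = 0"
    and diffS: "\<And>x y. x \<in> S \<Longrightarrow> y \<in> S \<Longrightarrow> (\<lambda>j p. x j p - y j p) \<in> S"
    and finS: "\<And>x. x \<in> S \<Longrightarrow> finite (supp x)"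
  shows "orth_proj S c = d"
  unfolding orth_proj_def
proof (rule the_equality)
  show "d \<in> S \<and> (\<forall>e\<in>S. inner_K e (c - d) = 0)" using dS orth by blast
next
  fix d' assume H: "d' \<in> S \<and> (\<forall>e\<in>S. inner_K e (c - d') = 0)"
  define e where "e = (\<lambda>j p. d' j p - d j p)"
  have eS: "e \<in> S" unfolding e_def using diffS H dS by blast
  define F where "F = supp e"
  have fF: "finite F" using finS eS F_def by blast
  have "inner_K e (c - d) - inner_K e (c - d') = of_real Vol * ((\<Sum>(j, p)\<in>F. cnj (e j p) * (c - d) j p) - (\<Sum>(j, p)\<in>F. cnj (e j p) * (c - d') j p))"
    by (simp only: inner_fin[OF fF] F_def right_diff_distrib)
  also have "(\<Sum>(j, p)\<in>F. cnj (e j p) * (c - d) j p) - (\<Sum>(j, p)\<in>F. cnj (e j p) * (c - d') j p)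
      = (\<Sum>(j, p)\<in>F. cnj (e j p) * (c - d) j p - cnj (e j p) * (c - d') j p)"
    by (simp only: sum_subtractf[symmetric] case_prod_unfold)
  also have "\<dots> = (\<Sum>(j, p)\<in>F. cnj (e j p) * e j p)"
    by (rule sum.cong) (auto simp: e_def right_diff_distrib[symmetric])
  finally have eq1: "inner_K e (c - d) - inner_K e (c - d') = of_real Vol * (\<Sum>(j, p)\<in>F. cnj (e j p) * e j p)" .
  have "inner_K e (c - d) - inner_K e (c - d') = 0" using H orth eS by simp
  with eq1 have "(\<Sum>(j, p)\<in>F. cnj (e j p) * e j p) = 0" using Vol_pos by simp
  moreover have "(\<Sum>(j, p)\<in>F. cnj (e j p) * e j p) = of_real (\<Sum>(j, p)\<in>F. (cmod (e j p))\<^sup>2)"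
  proof -
    have pw: "\<And>z. cnj z * z = complex_of_real ((cmod z)^2)" by (subst complex_norm_square) (rule mult.commute)
    show ?thesis by (simp only: pw of_real_sum case_prod_unfold)
  qed
  ultimately have "complex_of_real (\<Sum>(j, p)\<in>F. (cmod (e j p))\<^sup>2) = 0" by simp
  then have S0: "(\<Sum>(j, p)\<in>F. (cmod (e j p))\<^sup>2) = 0" by (simp only: of_real_eq_0_iff)
  have "\<forall>x\<in>F. (\<lambda>(j, p). (cmod (e j p))\<^sup>2) x = 0"
    by (rule sum_nonneg_eq_0_iff[THEN iffD1, OF fF _ S0]) auto
  then have "\<And>j p. e j p = 0" by (auto simp: F_def supp_def)
  then show "d' = d" by (auto simp: e_def fun_eq_iff)
qed

lemma cspan_0: "(\<lambda>j p. 0) \<in> cspan X"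
  unfolding cspan_def by (rule CollectI, rule exI[of _ "{}"]) auto

lemma cspan_base: "x \<in> X \<Longrightarrow> x \<in> cspan X"
  unfolding cspan_def by (rule CollectI, rule exI[of _ "{x}"], rule exI[of _ "\<lambda>_. 1"]) auto

lemma cspan_add:
  assumes "c \<in> cspan X" "d \<in> cspan X"
  shows "(\<lambda>j p. c j p + d j p) \<in> cspan X"
proof -
  obtain F a where F: "finite F" "F \<subseteq> X" "c = (\<lambda>j q. \<Sum>x\<in>F. a x * x j q)"
    using assms(1) unfolding cspan_def by blast
  obtain G b where G: "finite G" "G \<subseteq> X" "d = (\<lambda>j q. \<Sum>x\<in>G. b x * x j q)"
    using assms(2) unfolding cspan_def by blast
  define ab where "ab x = (if x \<in> F then a x else 0) + (if x \<in> G then b x else 0)" for x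
  have 1: "(\<Sum>x\<in>F \<union> G. (if x \<in> F then a x else 0) * x j q) = (\<Sum>x\<in>F. a x * x j q)" for j q
    by (rule sum.mono_neutral_cong_right) (use F G in auto)
  have 2: "(\<Sum>x\<in>F \<union> G. (if x \<in> G then b x else 0) * x j q) = (\<Sum>x\<in>G. b x * x j q)" for j q
    by (rule sum.mono_neutral_cong_right) (use F G in auto)
  have "(\<lambda>j p. c j p + d j p) = (\<lambda>j q. \<Sum>x\<in>F \<union> G. ab x * x j q)"
  proof (intro ext)
    fix j q
    have "(\<Sum>x\<in>F \<union> G. ab x * x j q) = (\<Sum>x\<in>F \<union> G. (if x \<in> F then a x else 0) * x j q + (if x \<in> G then b x else 0) * x j q)"
      unfolding ab_def by (simp only: distrib_right)
    also have "\<dots> = (\<Sum>x\<in>F. a x * x j q) + (\<Sum>x\<in>G. b x * x j q)"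
      by (simp only: sum.distrib 1 2)
    finally show "c j q + d j q = (\<Sum>x\<in>F \<union> G. ab x * x j q)" by (simp add: F(3) G(3))
  qed
  then show ?thesis unfolding cspan_def using F(1,2) G(1,2)
    by (intro CollectI exI[of _ "F \<union> G"] exI[of _ ab]) simp
qed

lemma cspan_smult:
  assumes "c \<in> cspan X"
  shows "(\<lambda>j p. z * c j p) \<in> cspan X"
proof -
  obtain F a where F: "finite F" "F \<subseteq> X" "c = (\<lambda>j q. \<Sum>x\<in>F. a x * x j q)"
    using assms(1) unfolding cspan_def by blast
  have "(\<lambda>j p. z * c j p) = (\<lambda>j q. \<Sum>x\<in>F. (z * a x) * x j q)"
    by (simp add: F(3) fun_eq_iff sum_distrib_left mult.assoc)
  then show ?thesis unfolding cspan_def using F(1,2)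
    by (intro CollectI exI[of _ F] exI[of _ "\<lambda>x. z * a x"]) simp
qed

lemma cspan_diff:
  assumes "c \<in> cspan X" "d \<in> cspan X"
  shows "(\<lambda>j p. c j p - d j p) \<in> cspan X"
  using cspan_add[OF assms(1) cspan_smult[OF assms(2), of "-1"]] by simp

lemma cspan_sum:
  assumes "finite I" "\<And>i. i \<in> I \<Longrightarrow> f i \<in> cspan X"
  shows "(\<lambda>j p. \<Sum>i\<in>I. f i j p) \<in> cspan X"
  using assms
proof (induction I rule: finite_induct)
  case empty then show ?case by (simp add: cspan_0)
next
  case (insert i I)
  then show ?case using cspan_add[of "f i" X "\<lambda>j p. \<Sum>i\<in>I. f i j p"] by simp
qed

lemma cspan_supp:
  assumes "\<And>x j p. x \<in> X \<Longrightarrow> x j p \<noteq> 0 \<Longrightarrow> Q j p" "c \<in> cspan X" "c j p \<noteq> 0"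
  shows "Q j p"
proof -
  obtain F a where F: "finite F" "F \<subseteq> X" "c = (\<lambda>j q. \<Sum>x\<in>F. a x * x j q)"
    using assms(2) unfolding cspan_def by blast
  have "c j p = (\<Sum>x\<in>F. a x * x j p)" using F(3) by simp
  with assms(3) have "(\<Sum>x\<in>F. a x * x j p) \<noteq> 0" by simp
  then have "\<not> (\<forall>x\<in>F. a x * x j p = 0)" by (metis (mono_tags, lifting) sum.neutral)
  then obtain x where x: "x \<in> F" "a x * x j p \<noteq> 0" by blast
  then have "x \<in> X" "x j p \<noteq> 0" using F(2) by auto
  then show ?thesis by (rule assms(1))
qed


lemma sum3: "(\<Sum>k<3. (f :: nat \<Rightarrow> complex) k) = f 0 + f 1 + f 2"
  by (simp add: numeral_3_eq_3 numeral_2_eq_2)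

lemma wv0: "wv 0 = 1" by (simp add: wv_def)
lemma wv1: "wv 1 = cis phi" by (simp add: wv_def)
lemma wv2: "wv 2 = cis (- phi)" by (simp add: wv_def numeral_2_eq_2)

lemma rq1: "cis phi * qv 0 = qv 1" by (simp add: qv_def q1_def q2_def q3_def b1_def b2_def cis_phi complex_eq_iff field_simps)
lemma rq2: "cis phi * qv 1 = qv 2" by (simp add: qv_def q1_def q2_def q3_def b1_def b2_def cis_phi complex_eq_iff field_simps)
lemma rq3: "cis phi * qv 2 = qv 0" by (simp add: qv_def q1_def q2_def q3_def b1_def b2_def cis_phi complex_eq_iff field_simps)

lemma rqm0: "cis phi * p - qv 0 = cis phi * (p - qv 2)" by (metis right_diff_distrib rq3)
lemma rqm1: "cis phi * p - qv 1 = cis phi * (p - qv 0)" by (metis right_diff_distrib rq1)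
lemma rqm2: "cis phi * p - qv 2 = cis phi * (p - qv 1)" by (metis right_diff_distrib rq2)
lemma rqp0: "cis phi * p + qv 0 = cis phi * (p + qv 2)" by (metis distrib_left rq3)
lemma rqp1: "cis phi * p + qv 1 = cis phi * (p + qv 0)" by (metis distrib_left rq1)
lemma rqp2: "cis phi * p + qv 2 = cis phi * (p + qv 1)" by (metis distrib_left rq2)

lemma om3: "cis phi ^ 3 = 1"
  using cis_phi_cube by (simp add: power3_eq_cube mult.assoc)
lemma ombar: "cis (- phi) = cis phi * cis phi"
  by (simp add: cis_phi cis_mphi complex_eq_iff field_simps)

definition rotinv :: "coeff \<Rightarrow> bool" where
  "rotinv c \<longleftrightarrow> (\<forall>j p. c j (cis phi * p) = (if 2 \<le> j then cis phi else 1) * c j p)"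

lemma Rot_iff: "Rot c = c \<longleftrightarrow> rotinv c"
proof
  assume "Rot c = c"
  then have h: "\<And>j p. (if 2 \<le> j then cis (- phi) else 1) * c j (cis phi * p) = c j p"
    by (metis Rot_def)
  show "rotinv c" unfolding rotinv_def
  proof (intro allI)
    fix j p
    have "cis phi * ((if 2 \<le> j then cis (- phi) else 1) * c j (cis phi * p)) = cis phi * c j p"
      using h by simp
    moreover have "cis phi * cis (- phi) = 1" by (simp add: cis_mult)
    ultimately show "c j (cis phi * p) = (if 2 \<le> j then cis phi else 1) * c j p"
      by (cases "2 \<le> j") (simp_all add: mult.assoc[symmetric])
  qed
next
  assume r: "rotinv c"
  show "Rot c = c" unfolding Rot_def
  proof (intro ext)
    fix j p
    show "(if 2 \<le> j then cis (- phi) else 1) * c j (cis phi * p) = c j p"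
      using r unfolding rotinv_def by (auto simp: cis_mult mult.assoc[symmetric])
  qed
qed

lemma rotinv_m:
  assumes "rotinv c" shows "c j (cis (- phi) * p) = (if 2 \<le> j then cis (- phi) else 1) * c j p"
proof -
  have "c j (cis phi * (cis (- phi) * p)) = (if 2 \<le> j then cis phi else 1) * c j (cis (- phi) * p)"
    using assms unfolding rotinv_def by blast
  moreover have "cis phi * (cis (- phi) * p) = p" by (simp add: mult.assoc[symmetric] cis_mult)
  ultimately have "c j p = (if 2 \<le> j then cis phi else 1) * c j (cis (- phi) * p)" by simp
  then show ?thesis by (auto simp: mult.assoc[symmetric] cis_mult)
qed

lemma rotinv_H1:
  assumes r: "rotinv c" shows "rotinv (H1 c)"
proof -
  have r': "\<And>j p. c j (cis phi * p) = (if 2 \<le> j then cis phi else 1) * c j p"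
    using r unfolding rotinv_def by blast
  have o3: "cis phi ^ 3 = 1" by (rule om3)
  show ?thesis unfolding rotinv_def
  proof (intro allI)
    fix j p
    consider "j = 0" | "j = 1" | "j = 2" | "j = 3" | "(j::nat) \<ge> 4" by linarith
    then show "H1 c j (cis phi * p) = (if 2 \<le> j then cis phi else 1) * H1 c j p"
    proof cases
      case 1
      show ?thesis unfolding 1
        apply (simp add: H1_def sum3 wv0 wv1 wv2 cis_cnj rqp0 rqp1 rqp2 r' del: One_nat_def)
        apply (simp only: ombar)
        using o3 by algebra
    next
      case 2
      show ?thesis unfolding 2
        apply (simp add: H1_def sum3 wv0 wv1 wv2 cis_cnj rqm0 rqm1 rqm2 r' del: One_nat_def)
        apply (simp only: ombar)
        using o3 by algebra
    next
      case 3
      show ?thesis unfolding 3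
        apply (simp add: H1_def sum3 wv0 wv1 wv2 cis_cnj rqp0 rqp1 rqp2 r' del: One_nat_def)
        apply (simp only: ombar)
        using o3 by algebra
    next
      case 4
      show ?thesis unfolding 4
        apply (simp add: H1_def sum3 wv0 wv1 wv2 cis_cnj rqm0 rqm1 rqm2 r' del: One_nat_def)
        apply (simp only: ombar)
        using o3 by algebra
    next
      case 5
      then show ?thesis by (simp add: H1_def)
    qed
  qed
qed


definition fsupp :: "coeff \<Rightarrow> bool" where
  "fsupp c \<longleftrightarrow> (\<forall>j p. c j p \<noteq> 0 \<longrightarrow> j < 4 \<and> p \<in> freq j)"

definition good :: "coeff \<Rightarrow> bool" where
  "good c \<longleftrightarrow> fsupp c \<and> finite (supp c) \<and> rotinv c"

lemma good_L2K1: assumes "good c" shows "c \<in> L2K1"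
proof -
  have f: "finite (supp c)" and fs: "fsupp c" and r: "rotinv c" using assms by (auto simp: good_def)
  have "(\<lambda>(j, p). (cmod (c j p))\<^sup>2) summable_on UNIV"
    by (rule summable_fin[OF f]) (auto simp: supp_def)
  then show ?thesis using fs r by (auto simp: L2K1_def L2K_def fsupp_def Rot_iff)
qed

lemma good_domH0: assumes "good c" shows "c \<in> domH0"
proof -
  have f: "finite (supp c)" using assms by (auto simp: good_def)
  have "(\<lambda>(j, p). (cmod p * cmod (c j p))\<^sup>2) summable_on UNIV"
    by (rule summable_fin[OF f]) (auto simp: supp_def)
  then show ?thesis using good_L2K1[OF assms] by (auto simp: domH0_def)
qed

lemma L2K1_rotinv: "c \<in> L2K1 \<Longrightarrow> rotinv c" by (simp add: L2K1_def Rot_iff)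
lemma L2K1_fsupp: "c \<in> L2K1 \<Longrightarrow> fsupp c" by (simp add: L2K1_def L2K_def fsupp_def)

lemma zero_notin_Kset: "0 \<notin> Kset"
proof
  assume "0 \<in> Kset"
  then obtain a b where "0 = Kp a b" by (auto simp: Kset_iff)
  moreover have "Lm 0 0 = 0" by (simp add: Lm_def)
  ultimately show False using Lm_ne_Kp by metis
qed

lemma zero_in_LamStar: "0 \<in> LamStar"
  unfolding LamStar_iff by (rule exI[of _ 0], rule exI[of _ 0]) (simp add: Lm_def)

lemma rotinv_at0: assumes "rotinv c" "2 \<le> j" shows "c j 0 = 0"
proof -
  have "c j (cis phi * 0) = (if 2 \<le> j then cis phi else 1) * c j 0"
    using assms(1) unfolding rotinv_def by blast
  with assms(2) have "c j 0 = cis phi * c j 0" by simp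
  then have "(1 - cis phi) * c j 0 = 0" by (simp add: algebra_simps)
  moreover have "1 - cis phi \<noteq> 0" by (simp add: cis_phi complex_eq_iff)
  ultimately show ?thesis by simp
qed

lemma fsupp_odd0: "fsupp c \<Longrightarrow> odd j \<Longrightarrow> c j 0 = 0"
  unfolding fsupp_def using freq_odd zero_notin_Kset by metis

lemma freq_alt: "freq j = (if even j then LamStar else Kset)"
  by (simp add: freq_def Kset_def)

lemma good_add: "good c \<Longrightarrow> good d \<Longrightarrow> good (\<lambda>j p. c j p + d j p)"
proof -
  assume c: "good c" and d: "good d"
  have "supp (\<lambda>j p. c j p + d j p) \<subseteq> supp c \<union> supp d" by (auto simp: supp_def)
  then have "finite (supp (\<lambda>j p. c j p + d j p))" using c d by (meson finite_UnI finite_subset good_def)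
  moreover have "fsupp (\<lambda>j p. c j p + d j p)" unfolding fsupp_def
  proof (intro allI impI)
    fix j p assume "c j p + d j p \<noteq> 0"
    then have "c j p \<noteq> 0 \<or> d j p \<noteq> 0" by auto
    then show "j < 4 \<and> p \<in> freq j" using c d unfolding good_def fsupp_def by blast
  qed
  moreover have "rotinv (\<lambda>j p. c j p + d j p)" using c d unfolding good_def rotinv_def
    by (simp add: distrib_left)
  ultimately show ?thesis by (simp add: good_def)
qed

lemma good_smult: "good c \<Longrightarrow> good (\<lambda>j p. z * c j p)"
proof -
  assume c: "good c"
  have "supp (\<lambda>j p. z * c j p) \<subseteq> supp c" by (auto simp: supp_def)
  then have "finite (supp (\<lambda>j p. z * c j p))" using c by (meson finite_subset good_def)
  moreover have "fsupp (\<lambda>j p. z * c j p)" unfolding fsupp_def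
  proof (intro allI impI)
    fix j p assume "z * c j p \<noteq> 0"
    then have "c j p \<noteq> 0" by auto
    then show "j < 4 \<and> p \<in> freq j" using c unfolding good_def fsupp_def by blast
  qed
  moreover have "rotinv (\<lambda>j p. z * c j p)" using c unfolding good_def rotinv_def
    by (simp add: mult.left_commute)
  ultimately show ?thesis by (simp add: good_def)
qed

lemma good_0: "good (\<lambda>j p. 0)"
  by (simp add: good_def fsupp_def supp_def rotinv_def)

lemma good_sum: "finite I \<Longrightarrow> (\<And>i. i \<in> I \<Longrightarrow> good (f i)) \<Longrightarrow> good (\<lambda>j p. \<Sum>i\<in>I. f i j p)"
proof (induction I rule: finite_induct)
  case empty then show ?case by (simp add: good_0)
next
  case (insert i I)
  then show ?case using good_add[of "f i" "\<lambda>j p. \<Sum>i\<in>I. f i j p"] by simp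
qed

lemma H1_nz:
  assumes "H1 c j p \<noteq> 0"
  shows "\<exists>k<3. (j = 0 \<and> c 3 (p + qv k) \<noteq> 0) \<or> (j = 1 \<and> c 2 (p - qv k) \<noteq> 0)
           \<or> (j = 2 \<and> c 1 (p + qv k) \<noteq> 0) \<or> (j = 3 \<and> c 0 (p - qv k) \<noteq> 0)"
proof -
  consider "j = 0" | "j = 1" | "j = 2" | "j = 3" | "(j::nat) \<ge> 4" by linarith
  then show ?thesis
  proof cases
    case 1
    with assms have "(\<Sum>k<3. cnj (wv k) * c 3 (p + qv k)) \<noteq> 0" by (simp add: H1_def)
    then obtain k where "k < 3" "c 3 (p + qv k) \<noteq> 0" by (metis (no_types, lifting) lessThan_iff mult_zero_right sum.neutral)
    then show ?thesis using 1 by blast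
  next
    case 2
    with assms have "(\<Sum>k<3. cnj (wv k) * c 2 (p - qv k)) \<noteq> 0" by (simp add: H1_def)
    then obtain k where "k < 3" "c 2 (p - qv k) \<noteq> 0" by (metis (no_types, lifting) lessThan_iff mult_zero_right sum.neutral)
    then show ?thesis using 2 by blast
  next
    case 3
    with assms have "(\<Sum>k<3. wv k * c 1 (p + qv k)) \<noteq> 0" by (simp add: H1_def)
    then obtain k where "k < 3" "c 1 (p + qv k) \<noteq> 0" by (metis (no_types, lifting) lessThan_iff mult_zero_right sum.neutral)
    then show ?thesis using 3 by blast
  next
    case 4
    with assms have "(\<Sum>k<3. wv k * c 0 (p - qv k)) \<noteq> 0" by (simp add: H1_def)
    then obtain k where "k < 3" "c 0 (p - qv k) \<noteq> 0" by (metis (no_types, lifting) lessThan_iff mult_zero_right sum.neutral)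
    then show ?thesis using 4 by blast
  qed (use assms in \<open>simp add: H1_def\<close>)
qed

lemma k3_cases: "(k::nat) < 3 \<Longrightarrow> k = 0 \<or> k = 1 \<or> k = 2" by linarith

lemma Lm_plus_q: "k < 3 \<Longrightarrow> \<exists>a' b'. Lm a b + qv k = Kp a' b'"
  using Lm_q0 Lm_q1 Lm_q2 k3_cases by metis
lemma Kp_minus_q: "k < 3 \<Longrightarrow> \<exists>a' b'. Kp a b - qv k = Lm a' b'"
  using Kp_q0 Kp_q1 Kp_q2 k3_cases by metis

lemma shift_LK: "k < 3 \<Longrightarrow> p + qv k \<in> Kset \<longleftrightarrow> p \<in> LamStar"
proof
  assume k: "k < 3" and "p + qv k \<in> Kset"
  then obtain a b where "p + qv k = Kp a b" by (auto simp: Kset_iff)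
  then have "p = Kp a b - qv k" by (simp add: algebra_simps)
  then show "p \<in> LamStar" using Kp_minus_q[OF k] by (auto simp: LamStar_iff)
next
  assume k: "k < 3" and "p \<in> LamStar"
  then obtain a b where "p = Lm a b" by (auto simp: LamStar_iff)
  then show "p + qv k \<in> Kset" using Lm_plus_q[OF k] by (auto simp: Kset_iff)
qed

lemma shift_KL: "k < 3 \<Longrightarrow> p - qv k \<in> LamStar \<longleftrightarrow> p \<in> Kset"
  using shift_LK[of k "p - qv k"] by simp

lemma fsupp_H1: assumes "fsupp c" shows "fsupp (H1 c)"
  unfolding fsupp_def
proof (intro allI impI)
  fix j p assume "H1 c j p \<noteq> 0"
  from H1_nz[OF this] obtain k where k: "k < 3" and
    h: "(j = 0 \<and> c 3 (p + qv k) \<noteq> 0) \<or> (j = 1 \<and> c 2 (p - qv k) \<noteq> 0)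
           \<or> (j = 2 \<and> c 1 (p + qv k) \<noteq> 0) \<or> (j = 3 \<and> c 0 (p - qv k) \<noteq> 0)" by blast
  have A: "\<And>j p. c j p \<noteq> 0 \<Longrightarrow> j < 4 \<and> p \<in> (if even j then LamStar else Kset)"
    using assms unfolding fsupp_def freq_alt by blast
  from h show "j < 4 \<and> p \<in> freq j"
  proof (elim disjE conjE)
    assume "j = 0" "c 3 (p + qv k) \<noteq> 0"
    then show ?thesis using A[of 3 "p + qv k"] shift_LK[OF k, of p] by (simp add: freq_alt)
  next
    assume "j = 1" "c 2 (p - qv k) \<noteq> 0"
    then show ?thesis using A[of 2 "p - qv k"] shift_KL[OF k, of p] by (simp add: freq_alt)
  next
    assume "j = 2" "c 1 (p + qv k) \<noteq> 0"
    then show ?thesis using A[of 1 "p + qv k"] shift_LK[OF k, of p] by (simp add: freq_alt)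
  next
    assume "j = 3" "c 0 (p - qv k) \<noteq> 0"
    then show ?thesis using A[of 0 "p - qv k"] shift_KL[OF k, of p] by (simp add: freq_alt)
  qed
qed

lemma finite_supp_H1: assumes "finite (supp c)" shows "finite (supp (H1 c))"
proof -
  let ?A = "\<Union>k<3. (\<lambda>(j, p). (3 - j, if odd j then p - qv k else p + qv k)) ` supp c"
  have "supp (H1 c) \<subseteq> ?A"
  proof
    fix x assume "x \<in> supp (H1 c)"
    then obtain j p where x: "x = (j, p)" "H1 c j p \<noteq> 0" by (auto simp: supp_def)
    from H1_nz[OF x(2)] obtain k where k: "k < 3" and
      h: "(j = 0 \<and> c 3 (p + qv k) \<noteq> 0) \<or> (j = 1 \<and> c 2 (p - qv k) \<noteq> 0)
           \<or> (j = 2 \<and> c 1 (p + qv k) \<noteq> 0) \<or> (j = 3 \<and> c 0 (p - qv k) \<noteq> 0)" by blast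
    from h show "x \<in> ?A"
    proof (elim disjE conjE)
      assume jj: "j = 0" "c 3 (p + qv k) \<noteq> 0"
      then have "(3, p + qv k) \<in> supp c" by (simp add: supp_def)
      then show ?thesis using x k jj(1) by (auto intro!: bexI[of _ k] image_eqI[of _ _ "(3, p + qv k)"])
    next
      assume jj: "j = 1" "c 2 (p - qv k) \<noteq> 0"
      then have "(2, p - qv k) \<in> supp c" by (simp add: supp_def)
      then show ?thesis using x k jj(1) by (auto intro!: bexI[of _ k] image_eqI[of _ _ "(2, p - qv k)"])
    next
      assume jj: "j = 2" "c 1 (p + qv k) \<noteq> 0"
      then have "(1, p + qv k) \<in> supp c" by (simp add: supp_def)
      then show ?thesis using x k jj(1) by (auto intro!: bexI[of _ k] image_eqI[of _ _ "(1, p + qv k)"])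
    next
      assume jj: "j = 3" "c 0 (p - qv k) \<noteq> 0"
      then have "(0, p - qv k) \<in> supp c" by (simp add: supp_def)
      then show ?thesis using x k jj(1) by (auto intro!: bexI[of _ k] image_eqI[of _ _ "(0, p - qv k)"])
    qed
  qed
  moreover have "finite ?A" using assms by auto
  ultimately show ?thesis by (rule finite_subset)
qed

lemma good_H1: "good c \<Longrightarrow> good (H1 c)"
  using fsupp_H1 finite_supp_H1 rotinv_H1 by (auto simp: good_def)


lemma sqrtV: "sqrt Vol > 0" using Vol_pos by simp

lemma cspan_Psi0_supp: "e \<in> cspan {Psi0} \<Longrightarrow> e j p \<noteq> 0 \<Longrightarrow> j = 0 \<and> p = 0"
  by (rule cspan_supp[where X = "{Psi0}"]) (auto simp: Psi0_def split: if_splits)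

lemma P_eq: "P c = (\<lambda>j p. if j = 0 \<and> p = 0 then c 0 0 else 0)"
  unfolding P_def
proof (rule orth_proj_unique)
  let ?d = "(\<lambda>j p. if j = 0 \<and> p = 0 then c 0 0 else 0)"
  have "?d = (\<lambda>j p. (c 0 0 * sqrt Vol) * Psi0 j p)"
    using sqrtV by (auto simp: Psi0_def fun_eq_iff)
  then show "?d \<in> cspan {Psi0}" using cspan_smult[OF cspan_base[of Psi0 "{Psi0}"]] by simp
  show "\<forall>e\<in>cspan {Psi0}. inner_K e (c - ?d) = 0"
  proof
    fix e assume e: "e \<in> cspan {Psi0}"
    have "supp e \<subseteq> {(0, 0)}" using cspan_Psi0_supp[OF e] by (auto simp: supp_def)
    then show "inner_K e (c - ?d) = 0" by (simp add: inner_fin[of "{(0,0)}"])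
  qed
  show "\<And>x y. x \<in> cspan {Psi0} \<Longrightarrow> y \<in> cspan {Psi0} \<Longrightarrow> (\<lambda>j p. x j p - y j p) \<in> cspan {Psi0}"
    by (rule cspan_diff)
  show "\<And>x. x \<in> cspan {Psi0} \<Longrightarrow> finite (supp x)"
  proof -
    fix x assume "x \<in> cspan {Psi0}"
    then have "supp x \<subseteq> {(0, 0)}" using cspan_Psi0_supp by (auto simp: supp_def)
    then show "finite (supp x)" by (rule finite_subset) simp
  qed
qed

lemma Pperp_eq: "Pperp c = (\<lambda>j p. if j = 0 \<and> p = 0 then 0 else c j p)"
  by (simp add: Pperp_def P_eq fun_eq_iff)

definition Hinv :: "coeff \<Rightarrow> coeff" where
  "Hinv c = (\<lambda>j p. if j = 0 then c 2 p / p else if j = 1 then c 3 p / p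
      else if j = 2 then c 0 p / cnj p else if j = 3 then c 1 p / cnj p else 0)"

lemma Hinv_nz: "Hinv c j p \<noteq> 0 \<Longrightarrow> (j = 0 \<and> c 2 p \<noteq> 0) \<or> (j = 1 \<and> c 3 p \<noteq> 0) \<or> (j = 2 \<and> c 0 p \<noteq> 0) \<or> (j = 3 \<and> c 1 p \<noteq> 0)"
  by (auto simp: Hinv_def split: if_splits)

lemma Pperp_nz: "Pperp c j p \<noteq> 0 \<Longrightarrow> c j p \<noteq> 0"
  by (auto simp: Pperp_eq split: if_splits)

lemma good_Pperp: assumes "good c" shows "good (Pperp c)"
proof -
  have "supp (Pperp c) \<subseteq> supp c" using Pperp_nz by (auto simp: supp_def)
  then have "finite (supp (Pperp c))" using assms by (meson finite_subset good_def)
  moreover have "fsupp (Pperp c)" using assms Pperp_nz unfolding good_def fsupp_def by blast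
  moreover have "rotinv (Pperp c)" using assms unfolding good_def rotinv_def Pperp_eq by auto
  ultimately show ?thesis by (simp add: good_def)
qed

lemma good_Hinv: assumes "good c" shows "good (Hinv c)"
proof -
  have "supp (Hinv c) \<subseteq> {0..3} \<times> (snd ` supp c)"
  proof
    fix x assume "x \<in> supp (Hinv c)"
    then obtain j p where x: "x = (j, p)" "Hinv c j p \<noteq> 0" by (auto simp: supp_def)
    from Hinv_nz[OF x(2)] show "x \<in> {0..3} \<times> (snd ` supp c)"
      using x(1) by (auto simp: supp_def image_iff)
  qed
  then have "finite (supp (Hinv c))" using assms by (meson finite_SigmaI finite_atLeastAtMost finite_imageI finite_subset good_def)
  moreover have "fsupp (Hinv c)" unfolding fsupp_def
  proof (intro allI impI)
    fix j p assume "Hinv c j p \<noteq> 0"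
    from Hinv_nz[OF this] have "(j = 0 \<and> c 2 p \<noteq> 0) \<or> (j = 1 \<and> c 3 p \<noteq> 0) \<or> (j = 2 \<and> c 0 p \<noteq> 0) \<or> (j = 3 \<and> c 1 p \<noteq> 0)" .
    moreover have A: "\<And>j p. c j p \<noteq> 0 \<Longrightarrow> j < 4 \<and> p \<in> (if even j then LamStar else Kset)"
      using assms unfolding good_def fsupp_def freq_alt by blast
    ultimately show "j < 4 \<and> p \<in> freq j"
      using A[of 2 p] A[of 3 p] A[of 0 p] A[of 1 p] by (auto simp: freq_alt)
  qed
  moreover have "rotinv (Hinv c)"
  proof -
    have r: "\<And>j p. c j (cis phi * p) = (if 2 \<le> j then cis phi else 1) * c j p"
      using assms unfolding good_def rotinv_def by blast
    have nz: "cis phi \<noteq> 0" by simp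
    have key: "\<And>x y. x / (y * cnj (cis phi)) = cis phi * x / y"
    proof -
      fix x y
      have "cnj (cis phi) = inverse (cis phi)" by (simp add: cis_cnj)
      then show "x / (y * cnj (cis phi)) = cis phi * x / y"
        by (simp only: divide_inverse inverse_mult_distrib inverse_inverse_eq) (simp add: ac_simps)
    qed
    show ?thesis unfolding rotinv_def
    proof (intro allI)
      fix j p
      show "Hinv c j (cis phi * p) = (if 2 \<le> j then cis phi else 1) * Hinv c j p"
        unfolding Hinv_def using nz
        apply (simp add: r)
        apply (intro conjI impI)
        apply (simp_all add: field_simps)
        by (simp_all add: key)
    qed
  qed
  ultimately show ?thesis by (simp add: good_def)
qed

lemma H0_Hinv:
  assumes "good c" "c 0 0 = 0" shows "H0 (Hinv c) = c"
proof (intro ext)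
  fix j p
  have r: "rotinv c" and fs: "fsupp c" using assms by (auto simp: good_def)
  have c20: "c 2 0 = 0" using rotinv_at0[OF r] by simp
  have c30: "c 3 0 = 0" "c 1 0 = 0" using fsupp_odd0[OF fs] by auto
  have j4: "j \<ge> 4 \<Longrightarrow> c j p = 0" using fs unfolding fsupp_def by (meson leD)
  show "H0 (Hinv c) j p = c j p"
  proof (cases "p = 0")
    case True
    then show ?thesis using assms(2) c20 c30 j4 by (auto simp: H0_def Hinv_def)
  next
    case False
    then show ?thesis using j4 by (auto simp: H0_def Hinv_def)
  qed
qed

lemma H0inv_perp_eq:
  assumes "good c" "c 0 0 = 0" shows "H0inv_perp c = Hinv c"
  unfolding H0inv_perp_def
proof (rule the_equality)
  have g: "good (Hinv c)" by (rule good_Hinv[OF assms(1)])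
  have "Pperp (Hinv c) = Hinv c" by (auto simp: Pperp_eq Hinv_def fun_eq_iff)
  then show "Hinv c \<in> domH0 \<and> Pperp (Hinv c) = Hinv c \<and> H0 (Hinv c) = c"
    using good_domH0[OF g] H0_Hinv[OF assms] by blast
next
  fix d assume d: "d \<in> domH0 \<and> Pperp d = d \<and> H0 d = c"
  then have dL: "d \<in> L2K1" by (simp add: domH0_def)
  have r: "rotinv d" by (rule L2K1_rotinv[OF dL])
  have fs: "fsupp d" by (rule L2K1_fsupp[OF dL])
  have d00: "d 0 0 = 0" using d by (metis Pperp_eq)
  have d20: "d 2 0 = 0" "d 3 0 = 0" using rotinv_at0[OF r] by auto
  have d10: "d 1 0 = 0" using fsupp_odd0[OF fs] by auto
  have j4: "\<And>j p. j \<ge> 4 \<Longrightarrow> d j p = 0" using fs unfolding fsupp_def by (meson leD)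
  have Hc: "\<And>j p. H0 d j p = c j p" using d by simp
  show "d = Hinv c"
  proof (intro ext)
    fix j p
    show "d j p = Hinv c j p"
    proof (cases "p = 0")
      case True
      then show ?thesis using d00 d20 d10 j4 by (auto simp: Hinv_def)
    next
      case False
      have "cnj p \<noteq> 0" using False by simp
      then show ?thesis using False j4 Hc[of 0 p] Hc[of 1 p] Hc[of 2 p] Hc[of 3 p]
        by (auto simp: Hinv_def H0_def field_simps)
    qed
  qed
qed

lemma pinvH0_eq: assumes "good c" shows "pinvH0 c = Hinv (Pperp c)"
proof -
  have g: "good (Pperp c)" by (rule good_Pperp[OF assms])
  have "Pperp c 0 0 = 0" by (simp add: Pperp_eq)
  then have "H0inv_perp (Pperp c) = Hinv (Pperp c)" using H0inv_perp_eq[OF g] by blast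
  moreover have "Pperp (Hinv (Pperp c)) = Hinv (Pperp c)" by (auto simp: Pperp_eq Hinv_def fun_eq_iff)
  ultimately show ?thesis by (simp add: pinvH0_def)
qed

lemma good_Psi0: "good Psi0"
proof -
  have "supp Psi0 \<subseteq> {(0, 0)}" by (auto simp: supp_def Psi0_def split: if_splits)
  then have "finite (supp Psi0)" by (rule finite_subset) simp
  moreover have "fsupp Psi0" using zero_in_LamStar by (auto simp: fsupp_def Psi0_def freq_alt)
  moreover have "rotinv Psi0" by (auto simp: rotinv_def Psi0_def)
  ultimately show ?thesis by (simp add: good_def)
qed

lemma uminus_coeff: "(- c :: coeff) = (\<lambda>j p. (-1) * c j p)"
  by (simp add: fun_eq_iff)

lemma Psi_Suc: "good (Psi n) \<Longrightarrow> Psi (Suc n) = - Hinv (Pperp (H1 (Psi n)))"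
  using pinvH0_eq good_H1 by simp

lemma good_Psi: "good (Psi n)"
proof (induction n)
  case 0 then show ?case by (simp add: good_Psi0)
next
  case (Suc n)
  have "good (Hinv (Pperp (H1 (Psi n))))"
    by (intro good_Hinv good_Pperp good_H1 Suc.IH)
  then show ?case using Psi_Suc[OF Suc.IH] good_smult[of _ "-1"] by (simp add: uminus_coeff)
qed


definition hexd :: "int \<Rightarrow> int \<Rightarrow> int" where
  "hexd a b = max \<bar>a\<bar> (max \<bar>b\<bar> \<bar>a + b\<bar>)"

definition SE :: "int \<Rightarrow> coeff \<Rightarrow> bool" where
  "SE m c \<longleftrightarrow> (\<forall>j p. c j p \<noteq> 0 \<longrightarrow> j = 0 \<and> (\<exists>a b. p = Lm a b \<and> hexd a b \<le> m))"

definition SO :: "int \<Rightarrow> coeff \<Rightarrow> bool" where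
  "SO m c \<longleftrightarrow> (\<forall>j p. c j p \<noteq> 0 \<longrightarrow> j = 1 \<and> (\<exists>a b a0 b0. p = Kp a b \<and> hexd a0 b0 \<le> m \<and>
       (a = a0 \<and> b = b0 \<or> a = a0 + 1 \<and> b = b0 \<or> a = a0 \<and> b = b0 + 1)))"

lemma step_nz:
  assumes "(- Hinv (Pperp (H1 c))) j p \<noteq> 0"
  shows "(j = 0 \<and> H1 c 2 p \<noteq> 0) \<or> (j = 1 \<and> H1 c 3 p \<noteq> 0) \<or> (j = 2 \<and> H1 c 0 p \<noteq> 0) \<or> (j = 3 \<and> H1 c 1 p \<noteq> 0)"
proof -
  have "Hinv (Pperp (H1 c)) j p \<noteq> 0" using assms by simp
  from Hinv_nz[OF this] show ?thesis using Pperp_nz by blast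
qed

lemma step_EO: assumes "SE m c" shows "SO m (- Hinv (Pperp (H1 c)))"
  unfolding SO_def
proof (intro allI impI)
  fix j p assume "(- Hinv (Pperp (H1 c))) j p \<noteq> 0"
  from step_nz[OF this] have h: "(j = 0 \<and> H1 c 2 p \<noteq> 0) \<or> (j = 1 \<and> H1 c 3 p \<noteq> 0) \<or> (j = 2 \<and> H1 c 0 p \<noteq> 0) \<or> (j = 3 \<and> H1 c 1 p \<noteq> 0)" .
  have A: "\<And>j p. c j p \<noteq> 0 \<Longrightarrow> j = 0 \<and> (\<exists>a b. p = Lm a b \<and> hexd a b \<le> m)" using assms unfolding SE_def by blast
  from h show "j = 1 \<and> (\<exists>a b a0 b0. p = Kp a b \<and> hexd a0 b0 \<le> m \<and>
       (a = a0 \<and> b = b0 \<or> a = a0 + 1 \<and> b = b0 \<or> a = a0 \<and> b = b0 + 1))"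
  proof (elim disjE conjE)
    assume "j = 1" "H1 c 3 p \<noteq> 0"
    from H1_nz[OF this(2)] obtain k where k: "k < 3" "c 0 (p - qv k) \<noteq> 0" by auto
    from A[OF k(2)] obtain a b where ab: "p - qv k = Lm a b" "hexd a b \<le> m" by blast
    have pe: "p = Lm a b + qv k" using ab(1) by (simp add: algebra_simps)
    from k3_cases[OF k(1)] show ?thesis
    proof (elim disjE)
      assume "k = 0" then show ?thesis using pe ab(2) Lm_q0 \<open>j = 1\<close> by metis
    next
      assume "k = 1" then show ?thesis using pe ab(2) Lm_q1 \<open>j = 1\<close> by metis
    next
      assume "k = 2" then show ?thesis using pe ab(2) Lm_q2 \<open>j = 1\<close> by metis
    qed
  next
    assume "j = 0" "H1 c 2 p \<noteq> 0"
    from H1_nz[OF this(2)] obtain k where "c 1 (p + qv k) \<noteq> 0" by auto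
    then show ?thesis using A by fastforce
  next
    assume "j = 2" "H1 c 0 p \<noteq> 0"
    from H1_nz[OF this(2)] obtain k where "c 3 (p + qv k) \<noteq> 0" by auto
    then show ?thesis using A by fastforce
  next
    assume "j = 3" "H1 c 1 p \<noteq> 0"
    from H1_nz[OF this(2)] obtain k where "c 2 (p - qv k) \<noteq> 0" by auto
    then show ?thesis using A by fastforce
  qed
qed

lemma step_OE: assumes "SO m c" shows "SE (m + 1) (- Hinv (Pperp (H1 c)))"
  unfolding SE_def
proof (intro allI impI)
  fix j p assume "(- Hinv (Pperp (H1 c))) j p \<noteq> 0"
  from step_nz[OF this] have h: "(j = 0 \<and> H1 c 2 p \<noteq> 0) \<or> (j = 1 \<and> H1 c 3 p \<noteq> 0) \<or> (j = 2 \<and> H1 c 0 p \<noteq> 0) \<or> (j = 3 \<and> H1 c 1 p \<noteq> 0)" .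
  have A: "\<And>j p. c j p \<noteq> 0 \<Longrightarrow> j = 1 \<and> (\<exists>a b a0 b0. p = Kp a b \<and> hexd a0 b0 \<le> m \<and>
       (a = a0 \<and> b = b0 \<or> a = a0 + 1 \<and> b = b0 \<or> a = a0 \<and> b = b0 + 1))" using assms unfolding SO_def by blast
  from h show "j = 0 \<and> (\<exists>a b. p = Lm a b \<and> hexd a b \<le> m + 1)"
  proof (elim disjE conjE)
    assume "j = 0" "H1 c 2 p \<noteq> 0"
    from H1_nz[OF this(2)] obtain k where k: "k < 3" "c 1 (p + qv k) \<noteq> 0" by auto
    from A[OF k(2)] obtain a b a0 b0 where ab: "p + qv k = Kp a b" "hexd a0 b0 \<le> m"
       "a = a0 \<and> b = b0 \<or> a = a0 + 1 \<and> b = b0 \<or> a = a0 \<and> b = b0 + 1" by blast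
    have pe: "p = Kp a b - qv k" using ab(1) by (simp add: algebra_simps)
    from k3_cases[OF k(1)] show ?thesis
    proof (elim disjE)
      assume "k = 0"
      then have "p = Lm a b" using pe Kp_q0 by metis
      moreover have "hexd a b \<le> m + 1" using ab(2,3) unfolding hexd_def by auto
      ultimately show ?thesis using \<open>j = 0\<close> by blast
    next
      assume "k = 1"
      then have "p = Lm (a - 1) b" using pe Kp_q1 by metis
      moreover have "hexd (a - 1) b \<le> m + 1" using ab(2,3) unfolding hexd_def by auto
      ultimately show ?thesis using \<open>j = 0\<close> by blast
    next
      assume "k = 2"
      then have "p = Lm a (b - 1)" using pe Kp_q2 by metis
      moreover have "hexd a (b - 1) \<le> m + 1" using ab(2,3) unfolding hexd_def by auto
      ultimately show ?thesis using \<open>j = 0\<close> by blast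
    qed
  next
    assume "j = 1" "H1 c 3 p \<noteq> 0"
    from H1_nz[OF this(2)] obtain k where "c 0 (p - qv k) \<noteq> 0" by auto
    then show ?thesis using A by fastforce
  next
    assume "j = 2" "H1 c 0 p \<noteq> 0"
    from H1_nz[OF this(2)] obtain k where "c 3 (p + qv k) \<noteq> 0" by auto
    then show ?thesis using A by fastforce
  next
    assume "j = 3" "H1 c 1 p \<noteq> 0"
    from H1_nz[OF this(2)] obtain k where "c 2 (p - qv k) \<noteq> 0" by auto
    then show ?thesis using A by fastforce
  qed
qed

lemma Psi_supp: "SE (int m) (Psi (2 * m)) \<and> SO (int m) (Psi (2 * m + 1))"
proof (induction m)
  case 0
  have "SE 0 (Psi 0)"
    unfolding SE_def
  proof (intro allI impI)
    fix j p assume "Psi 0 j p \<noteq> 0"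
    then have "j = 0" "p = Lm 0 0" by (auto simp: Psi0_def Lm_def split: if_splits)
    then show "j = 0 \<and> (\<exists>a b. p = Lm a b \<and> hexd a b \<le> 0)" by (auto simp: hexd_def)
  qed
  moreover have eq: "Psi (Suc 0) = - Hinv (Pperp (H1 (Psi 0)))" by (rule Psi_Suc[OF good_Psi])
  ultimately have "SO 0 (Psi (Suc 0))" by (subst eq) (rule step_EO)
  with \<open>SE 0 (Psi 0)\<close> show ?case by (simp del: Psi.simps)
next
  case (Suc m)
  have e: "Psi (2 * Suc m) = - Hinv (Pperp (H1 (Psi (2 * m + 1))))"
    using Psi_Suc[OF good_Psi, of "2 * m + 1"] by simp
  have o: "Psi (2 * Suc m + 1) = - Hinv (Pperp (H1 (Psi (2 * Suc m))))"
    using Psi_Suc[OF good_Psi, of "2 * Suc m"] by simp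
  have so: "SO (int m) (Psi (2 * m + 1))" using Suc.IH by blast
  have "SE (int m + 1) (Psi (2 * Suc m))" unfolding e by (rule step_OE[OF so])
  then have se: "SE (int (Suc m)) (Psi (2 * Suc m))" by (metis of_nat_Suc add.commute)
  have "SO (int (Suc m)) (Psi (2 * Suc m + 1))" unfolding o by (rule step_EO[OF se])
  with se have "SE (int (Suc m)) (Psi (2 * Suc m)) \<and> SO (int (Suc m)) (Psi (2 * Suc m + 1))" by blast
  then show ?case by blast
qed


definition Se :: "int \<Rightarrow> int \<Rightarrow> bool" where "Se a b \<longleftrightarrow> a^2 + a*b + b^2 \<le> 16"
definition Ext6 :: "(int \<times> int) set" where "Ext6 = {(-4,1),(1,4),(4,-4),(1,-4),(-4,4),(4,1)}"
definition So :: "int \<Rightarrow> int \<Rightarrow> bool" where "So a b \<longleftrightarrow> a^2 + a*b + b^2 - a - b \<le> 15 \<or> (a, b) \<in> Ext6"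

definition e1 :: complex where "e1 = q1 - 4 * b1 + b2"
definition e2 :: complex where "e2 = q1 + b1 - 4 * b2"

definition inS :: "nat \<Rightarrow> complex \<Rightarrow> bool" where
  "inS j p \<longleftrightarrow> ((j = 0 \<or> j = 2) \<and> p \<in> LamStar \<and> (cmod p)\<^sup>2 \<le> 48)
     \<or> ((j = 1 \<or> j = 3) \<and> p \<in> Kset \<and> ((cmod p)\<^sup>2 \<le> 48 \<or> p \<in> orbit e1 \<or> p \<in> orbit e2))"

lemma e1_Kp: "e1 = Kp (-4) 1" by (simp add: e1_def Kp_def Lm_def)
lemma e2_Kp: "e2 = Kp 1 (-4)" by (simp add: e2_def Kp_def Lm_def)

lemma orbit_Kp: "orbit (Kp a b) = {Kp a b, Kp b (1 - a - b), Kp (1 - a - b) a}"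
  by (simp add: orbit_alt rotm_Kp rotp_Kp)
lemma orbit_Lm: "orbit (Lm a b) = {Lm a b, Lm b (- a - b), Lm (- a - b) a}"
  by (simp add: orbit_alt rotm_Lm rotp_Lm)

lemma Kp_in_Ext: "Kp a b \<in> orbit e1 \<or> Kp a b \<in> orbit e2 \<longleftrightarrow> (a, b) \<in> Ext6"
  by (auto simp: e1_Kp e2_Kp orbit_Kp Kp_inj Ext6_def)

lemma X3: "3 * (X::int) \<le> 48 \<longleftrightarrow> X \<le> 16" by linarith
lemma X3': "3 * (X::int) + 1 \<le> 48 \<longleftrightarrow> X \<le> 15" by linarith

lemma inS_Lm: "inS j (Lm a b) \<longleftrightarrow> (j = 0 \<or> j = 2) \<and> Se a b"
proof -
  have "(cmod (Lm a b))\<^sup>2 \<le> 48 \<longleftrightarrow> Se a b"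
  proof -
    have "(cmod (Lm a b))\<^sup>2 \<le> 48 \<longleftrightarrow> 3 * (a^2 + a*b + b^2) \<le> (48::int)"
      unfolding Lm_norm by linarith
    also have "\<dots> \<longleftrightarrow> Se a b" unfolding Se_def by (rule X3) 
    finally show ?thesis .
  qed
  moreover have "Lm a b \<in> LamStar" by (auto simp: LamStar_iff)
  ultimately show ?thesis using Lm_notin_Kset by (auto simp: inS_def)
qed

lemma inS_Kp: "inS j (Kp a b) \<longleftrightarrow> (j = 1 \<or> j = 3) \<and> So a b"
proof -
  have "(cmod (Kp a b))\<^sup>2 \<le> 48 \<longleftrightarrow> a^2 + a*b + b^2 - a - b \<le> 15"
  proof -
    have "(cmod (Kp a b))\<^sup>2 \<le> 48 \<longleftrightarrow> 3 * (a^2 + a*b + b^2 - a - b) + 1 \<le> (48::int)"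
      unfolding Kp_norm by linarith
    also have "\<dots> \<longleftrightarrow> a^2 + a*b + b^2 - a - b \<le> 15" by (rule X3')
    finally show ?thesis .
  qed
  moreover have "Kp a b \<in> Kset" by (auto simp: Kset_iff)
  ultimately show ?thesis using Kp_notin_LamStar Kp_in_Ext by (auto simp: inS_def So_def)
qed

lemma inS_cases: "inS j p \<Longrightarrow> (\<exists>a b. p = Lm a b \<and> (j = 0 \<or> j = 2) \<and> Se a b) \<or> (\<exists>a b. p = Kp a b \<and> (j = 1 \<or> j = 3) \<and> So a b)"
proof -
  assume h: "inS j p"
  then have "p \<in> LamStar \<or> p \<in> Kset" by (auto simp: inS_def)
  then show ?thesis
  proof
    assume "p \<in> LamStar" then obtain a b where "p = Lm a b" by (auto simp: LamStar_iff)
    then show ?thesis using h inS_Lm by blast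
  next
    assume "p \<in> Kset" then obtain a b where "p = Kp a b" by (auto simp: Kset_iff)
    then show ?thesis using h inS_Kp by blast
  qed
qed

lemma sq_ge: "\<bar>a::int\<bar> \<ge> 5 \<Longrightarrow> a^2 \<ge> 25"
proof -
  assume "\<bar>a\<bar> \<ge> 5"
  then have "\<bar>a\<bar> * \<bar>a\<bar> \<ge> 5 * 5" by (meson mult_mono order_trans zero_le_numeral abs_ge_zero)
  then show ?thesis by (simp add: power2_eq_square)
qed

lemma sq_ge2: "\<bar>a::int\<bar> \<ge> 5 \<Longrightarrow> a^2 \<ge> 5 * \<bar>a\<bar>"
proof -
  assume "\<bar>a\<bar> \<ge> 5"
  then have "\<bar>a\<bar> * \<bar>a\<bar> \<ge> 5 * \<bar>a\<bar>" by (metis abs_ge_zero mult_right_mono)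
  then show ?thesis by (simp add: power2_eq_square)
qed

lemma Se_bound: "Se a b \<Longrightarrow> \<bar>a\<bar> \<le> 4 \<and> \<bar>b\<bar> \<le> 4"
proof -
  assume "Se a b"
  then have h: "a^2 + a*b + b^2 \<le> 16" by (simp add: Se_def)
  have i1: "4 * (a^2 + a*b + b^2) = (a + 2*b)^2 + 3 * a^2" by (simp add: power2_eq_square algebra_simps)
  have i2: "4 * (a^2 + a*b + b^2) = (b + 2*a)^2 + 3 * b^2" by (simp add: power2_eq_square algebra_simps)
  have "(a + 2*b)^2 \<ge> 0" "(b + 2*a)^2 \<ge> 0" by simp_all
  then have "\<not> 5 \<le> \<bar>a\<bar>" "\<not> 5 \<le> \<bar>b\<bar>" using h i1 i2 sq_ge[of a] sq_ge[of b] by (smt (verit))+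
  then show ?thesis by linarith
qed

lemma So_bound: "So a b \<Longrightarrow> \<bar>a\<bar> \<le> 4 \<and> \<bar>b\<bar> \<le> 4"
proof -
  assume "So a b"
  then consider "a^2 + a*b + b^2 - a - b \<le> 15" | "(a, b) \<in> Ext6" by (auto simp: So_def)
  then show ?thesis
  proof cases
    case 1
    have i1: "4 * (a^2 + a*b + b^2 - a - b) = (a + 2*b - 1)^2 + 3 * a^2 - 2 * a - 1" by (simp add: power2_eq_square algebra_simps)
    have i2: "4 * (a^2 + a*b + b^2 - a - b) = (b + 2*a - 1)^2 + 3 * b^2 - 2 * b - 1" by (simp add: power2_eq_square algebra_simps)
    have "(a + 2*b - 1)^2 \<ge> 0" "(b + 2*a - 1)^2 \<ge> 0" by simp_all
    have "\<not> 5 \<le> \<bar>a\<bar>"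
    proof
      assume a5: "5 \<le> \<bar>a\<bar>"
      have "a \<le> \<bar>a\<bar>" by simp
      then show False using a5 sq_ge2[OF a5] 1 i1 \<open>(a + 2*b - 1)^2 \<ge> 0\<close> by (smt (verit))
    qed
    moreover have "\<not> 5 \<le> \<bar>b\<bar>"
    proof
      assume b5: "5 \<le> \<bar>b\<bar>"
      have "b \<le> \<bar>b\<bar>" by simp
      then show False using b5 sq_ge2[OF b5] 1 i2 \<open>(b + 2*a - 1)^2 \<ge> 0\<close> by (smt (verit))
    qed
    ultimately show ?thesis by linarith
  next
    case 2 then show ?thesis by (auto simp: Ext6_def)
  qed
qed

lemma inS_imp: "inS j p \<Longrightarrow> j < 4 \<and> p \<in> freq j"
  by (auto simp: inS_def freq_alt)

lemma finite_inS: "finite {(j, p). inS j p}"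
proof -
  let ?B = "{-4..4::int} \<times> {-4..4::int}"
  have "{(j, p). inS j p} \<subseteq> {0..3} \<times> ((\<lambda>(a, b). Lm a b) ` ?B \<union> (\<lambda>(a, b). Kp a b) ` ?B)"
  proof
    fix x assume "x \<in> {(j, p). inS j p}"
    then obtain j p where x: "x = (j, p)" "inS j p" by auto
    from inS_cases[OF x(2)] show "x \<in> {0..3} \<times> ((\<lambda>(a, b). Lm a b) ` ?B \<union> (\<lambda>(a, b). Kp a b) ` ?B)"
    proof
      assume "\<exists>a b. p = Lm a b \<and> (j = 0 \<or> j = 2) \<and> Se a b"
      then obtain a b where "p = Lm a b" "j = 0 \<or> j = 2" "Se a b" by blast
      moreover have "(a, b) \<in> ?B" using Se_bound[OF \<open>Se a b\<close>] by auto
      ultimately show ?thesis using x(1) by auto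
    next
      assume "\<exists>a b. p = Kp a b \<and> (j = 1 \<or> j = 3) \<and> So a b"
      then obtain a b where "p = Kp a b" "j = 1 \<or> j = 3" "So a b" by blast
      moreover have "(a, b) \<in> ?B" using So_bound[OF \<open>So a b\<close>] by auto
      ultimately show ?thesis using x(1) by auto
    qed
  qed
  moreover have "finite ({0..3::nat} \<times> ((\<lambda>(a, b). Lm a b) ` ?B \<union> (\<lambda>(a, b). Kp a b) ` ?B))" by simp
  ultimately show ?thesis by (rule finite_subset)
qed

lemma LamStar_rot: "p \<in> LamStar \<Longrightarrow> cis phi * p \<in> LamStar \<and> cis (- phi) * p \<in> LamStar"
  by (metis LamStar_iff rotm_Lm rotp_Lm)
lemma Kset_rot: "p \<in> Kset \<Longrightarrow> cis phi * p \<in> Kset \<and> cis (- phi) * p \<in> Kset"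
  by (metis Kset_iff rotm_Kp rotp_Kp)

lemma om_om: "cis phi * cis phi = cis (- phi)" by (simp add: ombar)
lemma omb_omb: "cis (- phi) * cis (- phi) = cis phi"
  by (simp add: cis_mult cis_m2phi'[symmetric])
lemma om_omb: "cis phi * cis (- phi) = 1" by (simp add: cis_mult)
lemma omb_om: "cis (- phi) * cis phi = 1" by (simp add: cis_mult)

lemma orbit_rot: "cis phi * p \<in> orbit e \<longleftrightarrow> p \<in> orbit e"
proof -
  have A: "cis phi * p = x \<longleftrightarrow> p = cis (- phi) * x" for x
    by (auto simp: mult.assoc[symmetric] omb_om om_omb)
  show ?thesis unfolding orbit_alt
    by (auto simp: A mult.assoc[symmetric] omb_omb omb_om)
qed

lemma inS_rot: "inS j (cis phi * p) \<longleftrightarrow> inS j p"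
proof -
  have L: "cis phi * p \<in> LamStar \<longleftrightarrow> p \<in> LamStar"
    using LamStar_rot[of p] LamStar_rot[of "cis phi * p"] by (auto simp: mult.assoc[symmetric] omb_om)
  have K: "cis phi * p \<in> Kset \<longleftrightarrow> p \<in> Kset"
    using Kset_rot[of p] Kset_rot[of "cis phi * p"] by (auto simp: mult.assoc[symmetric] omb_om)
  have N: "cmod (cis phi * p) = cmod p" by (simp add: norm_mult)
  show ?thesis unfolding inS_def L K N orbit_rot ..
qed

lemma enum_C1: "\<forall>a\<in>{-4..4::int}. \<forall>b\<in>{-4..4::int}. Se a b \<longrightarrow>
   (So a b \<or> So (a+1) b) \<and> (So a b \<or> So a (b+1)) \<and> (So (a+1) b \<or> So a (b+1))"
  by (simp add: set_upto[symmetric] upto.simps Se_def So_def Ext6_def)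

lemma enum_C2: "\<forall>a\<in>{-4..4::int}. \<forall>b\<in>{-4..4::int}. So a b \<longrightarrow>
   (Se a b \<or> Se (a-1) b) \<and> (Se a b \<or> Se a (b-1)) \<and> (Se (a-1) b \<or> Se a (b-1))"
  by (simp add: set_upto[symmetric] upto.simps Se_def So_def Ext6_def)

lemma enum_C3: "\<forall>a\<in>{-5..5::int}. \<forall>b\<in>{-5..5::int}. \<not> So a b \<longrightarrow>
   \<not> (Se a b \<and> Se (a-1) b) \<and> \<not> (Se a b \<and> Se a (b-1)) \<and> \<not> (Se (a-1) b \<and> Se a (b-1))"
  by (simp add: set_upto[symmetric] upto.simps Se_def So_def Ext6_def)

lemma enum_C4: "\<forall>a\<in>{-5..5::int}. \<forall>b\<in>{-5..5::int}. \<not> Se a b \<longrightarrow>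
   \<not> (So a b \<and> So (a+1) b) \<and> \<not> (So a b \<and> So a (b+1)) \<and> \<not> (So (a+1) b \<and> So a (b+1))"
  by (simp add: set_upto[symmetric] upto.simps Se_def So_def Ext6_def)

lemma enum_E: "\<forall>a\<in>{-4..4::int}. \<forall>b\<in>{-4..4::int}. hexd a b \<le> 4 \<longrightarrow> Se a b"
  by (simp add: set_upto[symmetric] upto.simps Se_def hexd_def)

lemma enum_O: "\<forall>a\<in>{-3..3::int}. \<forall>b\<in>{-3..3::int}. hexd a b \<le> 3 \<longrightarrow> So a b \<and> So (a+1) b \<and> So a (b+1)"
  by (simp add: set_upto[symmetric] upto.simps So_def hexd_def Ext6_def)

lemma C1: "Se a b \<Longrightarrow> (So a b \<or> So (a+1) b) \<and> (So a b \<or> So a (b+1)) \<and> (So (a+1) b \<or> So a (b+1))"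
proof -
  assume h: "Se a b"
  have "a \<in> {-4..4}" "b \<in> {-4..4}" using Se_bound[OF h] by auto
  then show ?thesis using enum_C1 h by blast
qed
lemma C2: "So a b \<Longrightarrow> (Se a b \<or> Se (a-1) b) \<and> (Se a b \<or> Se a (b-1)) \<and> (Se (a-1) b \<or> Se a (b-1))"
proof -
  assume h: "So a b"
  have "a \<in> {-4..4}" "b \<in> {-4..4}" using So_bound[OF h] by auto
  then show ?thesis using enum_C2 h by blast
qed
lemma C3: "\<not> So a b \<Longrightarrow> \<not> (Se a b \<and> Se (a-1) b) \<and> \<not> (Se a b \<and> Se a (b-1)) \<and> \<not> (Se (a-1) b \<and> Se a (b-1))"
proof -
  assume n: "\<not> So a b"
  have "Se a b \<or> Se (a-1) b \<or> Se a (b-1) \<Longrightarrow> a \<in> {-5..5} \<and> b \<in> {-5..5}"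
    using Se_bound[of a b] Se_bound[of "a-1" b] Se_bound[of a "b-1"] by auto
  then show ?thesis using enum_C3 n by blast
qed
lemma C4: "\<not> Se a b \<Longrightarrow> \<not> (So a b \<and> So (a+1) b) \<and> \<not> (So a b \<and> So a (b+1)) \<and> \<not> (So (a+1) b \<and> So a (b+1))"
proof -
  assume n: "\<not> Se a b"
  have "So a b \<or> So (a+1) b \<or> So a (b+1) \<Longrightarrow> a \<in> {-5..5} \<and> b \<in> {-5..5}"
    using So_bound[of a b] So_bound[of "a+1" b] So_bound[of a "b+1"] by auto
  then show ?thesis using enum_C4 n by blast
qed
lemma hexE: "hexd a b \<le> 4 \<Longrightarrow> Se a b"
proof -
  assume h: "hexd a b \<le> 4"
  then have "a \<in> {-4..4} \<and> b \<in> {-4..4}" by (auto simp: hexd_def)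
  then show ?thesis using enum_E h by blast
qed
lemma hexO: "hexd a b \<le> 3 \<Longrightarrow> So a b \<and> So (a+1) b \<and> So a (b+1)"
proof -
  assume h: "hexd a b \<le> 3"
  then have "a \<in> {-3..3} \<and> b \<in> {-3..3}" by (auto simp: hexd_def)
  then show ?thesis using enum_O h by blast
qed


lemma zhat_rot: "zhat (cis phi * q) = cis phi * zhat q"
  by (simp add: zhat_def norm_mult)

lemma orbit_mem: "q \<in> orbit p \<longleftrightarrow> q = p \<or> q = cis (- phi) * p \<or> q = cis phi * p"
  by (simp add: orbit_alt)

lemma orbit_self: "p \<in> orbit p" by (simp add: orbit_mem)

lemma orbit_sym: assumes "q \<in> orbit p" shows "p \<in> orbit q"
proof -
  from assms consider "q = p" | "q = cis (- phi) * p" | "q = cis phi * p" by (auto simp: orbit_mem)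
  then show ?thesis
  proof cases
    case 1 then show ?thesis by (simp add: orbit_self)
  next
    case 2 then show ?thesis by (simp add: orbit_mem mult.assoc[symmetric] om_omb)
  next
    case 3 then show ?thesis by (simp add: orbit_mem mult.assoc[symmetric] omb_om)
  qed
qed

lemma orbit_eq: "q \<in> orbit p \<Longrightarrow> orbit q = orbit p"
  unfolding orbit_mem
proof (elim disjE)
  assume "q = cis (- phi) * p"
  then show ?thesis by (simp add: orbit_alt mult.assoc[symmetric] omb_omb om_omb insert_commute)
next
  assume "q = cis phi * p"
  then show ?thesis by (simp add: orbit_alt mult.assoc[symmetric] om_om omb_om insert_commute)
qed simp

lemma orbit_0: "0 \<in> orbit p \<Longrightarrow> p = 0"
  by (auto simp: orbit_mem)

lemma rot_back: "q = cis (- phi) * p \<Longrightarrow> p = cis phi * q" "q = cis phi * p \<Longrightarrow> p = cis (- phi) * q"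
  by (simp_all add: mult.assoc[symmetric] om_omb omb_om)

lemma orbit_LamStar: "q \<in> orbit p \<Longrightarrow> q \<in> LamStar \<longleftrightarrow> p \<in> LamStar"
  unfolding orbit_mem
proof (elim disjE)
  assume h: "q = cis (- phi) * p"
  have h2: "p = cis phi * q" using rot_back(1)[OF h] .
  show ?thesis
  proof
    assume "q \<in> LamStar" then show "p \<in> LamStar" using LamStar_rot[of q] h2 by simp
  next
    assume "p \<in> LamStar" then show "q \<in> LamStar" using LamStar_rot[of p] h by simp
  qed
next
  assume h: "q = cis phi * p"
  have h2: "p = cis (- phi) * q" using rot_back(2)[OF h] .
  show ?thesis
  proof
    assume "q \<in> LamStar" then show "p \<in> LamStar" using LamStar_rot[of q] h2 by simp
  next
    assume "p \<in> LamStar" then show "q \<in> LamStar" using LamStar_rot[of p] h by simp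
  qed
qed simp

lemma orbit_Kset: "q \<in> orbit p \<Longrightarrow> q \<in> Kset \<longleftrightarrow> p \<in> Kset"
  unfolding orbit_mem
proof (elim disjE)
  assume h: "q = cis (- phi) * p"
  have h2: "p = cis phi * q" using rot_back(1)[OF h] .
  show ?thesis
  proof
    assume "q \<in> Kset" then show "p \<in> Kset" using Kset_rot[of q] h2 by simp
  next
    assume "p \<in> Kset" then show "q \<in> Kset" using Kset_rot[of p] h by simp
  qed
next
  assume h: "q = cis phi * p"
  have h2: "p = cis (- phi) * q" using rot_back(2)[OF h] .
  show ?thesis
  proof
    assume "q \<in> Kset" then show "p \<in> Kset" using Kset_rot[of q] h2 by simp
  next
    assume "p \<in> Kset" then show "q \<in> Kset" using Kset_rot[of p] h by simp
  qed
qed simp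

lemma orbit_cmod: "q \<in> orbit p \<Longrightarrow> cmod q = cmod p"
  by (auto simp: orbit_mem norm_mult)

lemma inS_orbit: "q \<in> orbit p \<Longrightarrow> inS j q \<longleftrightarrow> inS j p"
  unfolding orbit_mem
proof (elim disjE)
  assume "q = cis (- phi) * p"
  then have "p = cis phi * q" by (simp add: mult.assoc[symmetric] om_omb)
  then show ?thesis using inS_rot by simp
qed (auto simp: inS_rot)

lemma cis_ne1: "cis phi \<noteq> 1" "cis (- phi) \<noteq> 1" "cis phi \<noteq> cis (- phi)"
  by (simp_all add: cis_phi cis_mphi complex_eq_iff)

lemma card_orbit: "p \<noteq> 0 \<Longrightarrow> card (orbit p) = 3"
proof -
  assume p: "p \<noteq> 0"
  have 1: "p \<noteq> cis (- phi) * p" using p cis_ne1(2) by (metis mult_cancel_right2)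
  have 2: "p \<noteq> cis phi * p" using p cis_ne1(1) by (metis mult_cancel_right2)
  have 3: "cis (- phi) * p \<noteq> cis phi * p" using p cis_ne1(3) by simp
  show ?thesis using 1 2 3 by (simp add: orbit_alt)
qed

lemma finite_orbit: "finite (orbit p)" by (simp add: orbit_alt)

definition kV :: complex where "kV = of_real (1 / sqrt (3 * Vol))"
lemma kV_nz: "kV \<noteq> 0" using Vol_pos by (simp add: kV_def)

lemma chi_alt: "chi p s j q = (if j = chi_comp p s \<and> q \<in> orbit p then kV * (if s then 1 else zhat q) else 0)"
  by (simp add: chi_def kV_def)

lemma chi_comp_cases: "chi_comp p s < 4" "s \<Longrightarrow> chi_comp p s < 2" "\<not> s \<Longrightarrow> chi_comp p s \<ge> 2"
  by (auto simp: chi_comp_def)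

lemma good_chi: assumes "p \<in> LamStar \<or> p \<in> Kset" shows "good (chi p s)"
proof -
  have "supp (chi p s) \<subseteq> {chi_comp p s} \<times> orbit p"
  proof
    fix x assume "x \<in> supp (chi p s)"
    then obtain j q where "x = (j, q)" "chi p s j q \<noteq> 0" by (auto simp: supp_def)
    then show "x \<in> {chi_comp p s} \<times> orbit p" unfolding chi_alt by (auto split: if_splits)
  qed
  then have "finite (supp (chi p s))" using finite_orbit by (meson finite_SigmaI finite_insert finite.emptyI finite_subset)
  moreover have "fsupp (chi p s)" unfolding fsupp_def
  proof (intro allI impI)
    fix j q assume "chi p s j q \<noteq> 0"
    then have jq: "j = chi_comp p s" "q \<in> orbit p" by (auto simp: chi_alt split: if_splits)
    from assms show "j < 4 \<and> q \<in> freq j"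
    proof
      assume pL: "p \<in> LamStar"
      then have "q \<in> LamStar" using orbit_LamStar[OF jq(2)] by simp
      then show ?thesis using jq(1) pL by (auto simp: chi_comp_def freq_alt)
    next
      assume pK: "p \<in> Kset"
      then have "p \<notin> LamStar" using Kp_notin_LamStar by (auto simp: Kset_iff)
      moreover have "q \<in> Kset" using orbit_Kset[OF jq(2)] pK by simp
      ultimately show ?thesis using jq(1) by (auto simp: chi_comp_def freq_alt)
    qed
  qed
  moreover have "rotinv (chi p s)" unfolding rotinv_def
  proof (intro allI)
    fix j q
    have o: "cis phi * q \<in> orbit p \<longleftrightarrow> q \<in> orbit p" by (rule orbit_rot)
    show "chi p s j (cis phi * q) = (if 2 \<le> j then cis phi else 1) * chi p s j q"
      using chi_comp_cases[where p=p and s=s] by (auto simp: chi_alt o zhat_rot)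
  qed
  ultimately show ?thesis by (simp add: good_def)
qed

lemma chi0_eq: "chi0 = Psi0" by (simp add: chi0_def Psi0_def)

lemma LK_cases: "p \<in> LamStar \<Longrightarrow> p \<notin> Kset" using Lm_notin_Kset by (auto simp: LamStar_iff)

lemma sqrt48: "sqrt 48 = 4 * sqrt 3"
proof -
  have "(4 * sqrt 3)^2 = 48" by (simp add: power_mult_distrib)
  moreover have "4 * sqrt 3 \<ge> 0" by simp
  ultimately show ?thesis by (metis real_sqrt_unique)
qed

lemma cmod_le: "cmod p \<le> 4 * sqrt 3 \<longleftrightarrow> (cmod p)\<^sup>2 \<le> 48"
proof
  assume h: "cmod p \<le> 4 * sqrt 3"
  have "(cmod p)^2 \<le> (4 * sqrt 3)^2" by (rule power_mono[OF h]) simp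
  also have "(4 * sqrt 3)^2 = (48::real)" by (simp add: power_mult_distrib)
  finally show "(cmod p)\<^sup>2 \<le> 48" .
next
  assume h: "(cmod p)\<^sup>2 \<le> 48"
  have "cmod p = sqrt ((cmod p)^2)" by simp
  also have "\<dots> \<le> sqrt 48" using h by (rule real_sqrt_le_mono)
  finally show "cmod p \<le> 4 * sqrt 3" by (simp add: sqrt48)
qed

lemma Xi_cases: "x \<in> Xi \<Longrightarrow> x = chi0 \<or> (\<exists>p s. x = chi p s \<and> (p \<in> LamStar \<or> p \<in> Kset) \<and> p \<noteq> 0 \<and>
   (\<forall>q j. q \<in> orbit p \<longrightarrow> (j = chi_comp p s) \<longrightarrow> inS j q))"
proof -
  assume "x \<in> Xi"
  then have "x = chi0 \<or> (\<exists>p s. x = chi p s \<and> p \<in> (LamStar - {0}) \<union> (\<lambda>g. q1 + g) ` LamStar \<and> cmod p \<le> 4 * sqrt 3)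
     \<or> (\<exists>p s. x = chi p s \<and> p \<in> {e1, e2})"
    unfolding Xi_def e1_def e2_def by blast
  then show ?thesis
  proof (elim disjE exE conjE)
    assume "x = chi0" then show ?thesis by blast
  next
    fix p s assume x: "x = chi p s" and P: "p \<in> (LamStar - {0}) \<union> (\<lambda>g. q1 + g) ` LamStar" and c: "cmod p \<le> 4 * sqrt 3"
    have n: "(cmod p)\<^sup>2 \<le> 48" using c cmod_le by blast
    have pLK: "p \<in> LamStar \<and> p \<noteq> 0 \<or> p \<in> Kset" using P unfolding Kset_def by blast
    then have pnz: "p \<noteq> 0" using zero_notin_Kset by auto
    have "\<forall>q j. q \<in> orbit p \<longrightarrow> j = chi_comp p s \<longrightarrow> inS j q"
    proof (intro allI impI)
      fix q j assume q: "q \<in> orbit p" and j: "j = chi_comp p s"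
      have "inS j p"
      proof (cases "p \<in> LamStar")
        case True then show ?thesis using n j unfolding inS_def chi_comp_def by auto
      next
        case False then have "p \<in> Kset" using pLK by blast
        then show ?thesis using False n j unfolding inS_def chi_comp_def by auto
      qed
      then show "inS j q" using inS_orbit[OF q] by simp
    qed
    then show ?thesis using x pLK pnz by blast
  next
    fix p s assume x: "x = chi p s" and P: "p \<in> {e1, e2}"
    have pK: "p \<in> Kset" using P e1_Kp e2_Kp Kset_iff by auto
    then have pnz: "p \<noteq> 0" using zero_notin_Kset by auto
    have pE: "p \<in> orbit e1 \<or> p \<in> orbit e2" using P orbit_self by auto
    have pnL: "p \<notin> LamStar" using pK LK_cases by blast
    have "\<forall>q j. q \<in> orbit p \<longrightarrow> j = chi_comp p s \<longrightarrow> inS j q"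
    proof (intro allI impI)
      fix q j assume q: "q \<in> orbit p" and j: "j = chi_comp p s"
      have "inS j p" using pK pE pnL j unfolding inS_def chi_comp_def by auto
      then show "inS j q" using inS_orbit[OF q] by simp
    qed
    then show ?thesis using x pK pnz by blast
  qed
qed

lemma Xi_good: "x \<in> Xi \<Longrightarrow> good x"
proof -
  assume "x \<in> Xi"
  from Xi_cases[OF this] show "good x"
  proof
    assume "x = chi0" then show ?thesis using good_Psi0 chi0_eq by simp
  next
    assume "\<exists>p s. x = chi p s \<and> (p \<in> LamStar \<or> p \<in> Kset) \<and> p \<noteq> 0 \<and>
      (\<forall>q j. q \<in> orbit p \<longrightarrow> (j = chi_comp p s) \<longrightarrow> inS j q)"
    then obtain p s where "x = chi p s" "p \<in> LamStar \<or> p \<in> Kset" by blast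
    then show ?thesis using good_chi by simp
  qed
qed

lemma Xi_inS: "x \<in> Xi \<Longrightarrow> x j q \<noteq> 0 \<Longrightarrow> inS j q"
proof -
  assume x: "x \<in> Xi" and nz: "x j q \<noteq> 0"
  from Xi_cases[OF x] show ?thesis
  proof
    assume "x = chi0"
    then have "j = 0" "q = 0" using nz by (auto simp: chi0_def split: if_splits)
    then show ?thesis using zero_in_LamStar by (simp add: inS_def)
  next
    assume "\<exists>p s. x = chi p s \<and> (p \<in> LamStar \<or> p \<in> Kset) \<and> p \<noteq> 0 \<and>
      (\<forall>q j. q \<in> orbit p \<longrightarrow> (j = chi_comp p s) \<longrightarrow> inS j q)"
    then obtain p s where ps: "x = chi p s" "\<forall>q j. q \<in> orbit p \<longrightarrow> (j = chi_comp p s) \<longrightarrow> inS j q" by blast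
    then have "j = chi_comp p s" "q \<in> orbit p" using nz by (auto simp: chi_alt split: if_splits)
    then show ?thesis using ps(2) by blast
  qed
qed

lemma cspan_Xi_good: "c \<in> cspan Xi \<Longrightarrow> good c"
proof -
  assume "c \<in> cspan Xi"
  then obtain F a where F: "finite F" "F \<subseteq> Xi" "c = (\<lambda>j q. \<Sum>x\<in>F. a x * x j q)"
    unfolding cspan_def by blast
  have "\<And>x. x \<in> F \<Longrightarrow> good (\<lambda>j q. a x * x j q)"
  proof -
    fix x assume "x \<in> F"
    then have "good x" using F(2) Xi_good by blast
    then show "good (\<lambda>j q. a x * x j q)" by (rule good_smult)
  qed
  then have "good (\<lambda>j q. \<Sum>x\<in>F. a x * x j q)"
    by (rule good_sum[OF F(1)])
  then show ?thesis using F(3) by simp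
qed

lemma cspan_Xi_inS: "c \<in> cspan Xi \<Longrightarrow> c j q \<noteq> 0 \<Longrightarrow> inS j q"
proof -
  assume c: "c \<in> cspan Xi" and nz: "c j q \<noteq> 0"
  have X: "\<And>x j p. x \<in> Xi \<Longrightarrow> x j p \<noteq> 0 \<Longrightarrow> inS j p" by (rule Xi_inS)
  show ?thesis by (rule cspan_supp[where X = Xi, OF X c nz])
qed


lemma chi_comp_inS: "inS j p \<Longrightarrow> chi_comp p (j < 2) = j"
  using LK_cases by (auto simp: inS_def chi_comp_def)

lemma chi_orbit: "q \<in> orbit p \<Longrightarrow> chi q s = chi p s"
proof -
  assume q: "q \<in> orbit p"
  have "chi_comp q s = chi_comp p s" using orbit_LamStar[OF q] by (simp add: chi_comp_def)
  moreover have "orbit q = orbit p" by (rule orbit_eq[OF q])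
  ultimately show ?thesis by (simp add: chi_def)
qed

lemma chi_in_Xi: assumes "inS j p" "p \<noteq> 0" shows "chi p s \<in> Xi"
proof -
  have c1: "p \<in> LamStar \<and> (cmod p)\<^sup>2 \<le> 48 \<or> p \<in> Kset \<and> (cmod p)\<^sup>2 \<le> 48 \<or> p \<in> orbit e1 \<or> p \<in> orbit e2"
    using assms(1) unfolding inS_def by blast
  show ?thesis
  proof (cases "p \<in> orbit e1 \<or> p \<in> orbit e2")
    case True
    then obtain e where e: "e = q1 - 4 * b1 + b2 \<or> e = q1 + b1 - 4 * b2" "p \<in> orbit e"
      unfolding e1_def e2_def by blast
    have "chi p s = chi e s" by (rule chi_orbit[OF e(2)])
    moreover have "chi e s \<in> {chi p s | p s. p \<in> {q1 - 4 * b1 + b2, q1 + b1 - 4 * b2}}"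
      using e(1) by blast
    ultimately show ?thesis unfolding Xi_def by (intro UnI2) simp
  next
    case False
    then have cm: "(cmod p)\<^sup>2 \<le> 48" and LK: "p \<in> LamStar \<or> p \<in> Kset" using c1 by blast+
    have "cmod p \<le> 4 * sqrt 3" using cm cmod_le[of p] by simp
    moreover have "p \<in> (LamStar - {0}) \<union> (\<lambda>g. q1 + g) ` LamStar"
      using LK assms(2) unfolding Kset_def by blast
    ultimately have "chi p s \<in> {chi p s | p s. p \<in> (LamStar - {0}) \<union> (\<lambda>g. q1 + g) ` LamStar \<and> cmod p \<le> 4 * sqrt 3}"
      by blast
    then show ?thesis unfolding Xi_def by (intro UnI1 UnI2) simp
  qed
qed

lemma chi0_in_Xi: "chi0 \<in> Xi" unfolding Xi_def by (intro UnI1) simp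

definition Eo :: "coeff \<Rightarrow> nat \<Rightarrow> complex \<Rightarrow> coeff" where
  "Eo d j p = (\<lambda>j' p'. if j' = j \<and> p' \<in> orbit p then d j' p' else 0)"

lemma zhat_rotm: "zhat (cis (- phi) * q) = cis (- phi) * zhat q"
  by (simp add: zhat_def norm_mult)

lemma zhat_nz: "q \<noteq> 0 \<Longrightarrow> zhat q \<noteq> 0" by (simp add: zhat_def)

lemma Eo_chi:
  assumes g: "good d" and S: "inS j p" and p0: "p \<noteq> 0"
  shows "Eo d j p = (\<lambda>j' p'. (d j p / chi p (j < 2) j p) * chi p (j < 2) j' p')"
proof (intro ext)
  fix j' p'
  have r: "rotinv d" using g by (simp add: good_def)
  have cc: "chi_comp p (j < 2) = j" by (rule chi_comp_inS[OF S])
  define z where "z q = (if j < 2 then 1 else zhat q)" for q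
  have chi_eq: "\<And>j' q. chi p (j < 2) j' q = (if j' = j \<and> q \<in> orbit p then kV * z q else 0)"
    by (simp add: chi_alt cc z_def)
  have zp: "z p \<noteq> 0" using p0 zhat_nz by (simp add: z_def)
  have key: "d j p' * z p = d j p * z p'" if "p' \<in> orbit p"
  proof -
    from that consider "p' = p" | "p' = cis (- phi) * p" | "p' = cis phi * p" by (auto simp: orbit_mem)
    then show ?thesis
    proof cases
      case 1 then show ?thesis by simp
    next
      case 2
      have "d j p' = (if 2 \<le> j then cis (- phi) else 1) * d j p" using rotinv_m[OF r] 2 by simp
      then show ?thesis using 2 by (auto simp: z_def zhat_rotm)
    next
      case 3
      have "d j p' = (if 2 \<le> j then cis phi else 1) * d j p" using r 3 unfolding rotinv_def by simp
      then show ?thesis using 3 by (auto simp: z_def zhat_rot)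
    qed
  qed
  show "Eo d j p j' p' = (d j p / chi p (j < 2) j p) * chi p (j < 2) j' p'"
  proof (cases "j' = j \<and> p' \<in> orbit p")
    case True
    have "Eo d j p j' p' = d j p'" using True by (simp add: Eo_def)
    also have "\<dots> = d j p * z p' / z p" using key[of] True zp by (simp add: field_simps)
    also have "\<dots> = (d j p / (kV * z p)) * (kV * z p')" using kV_nz zp by (simp add: field_simps)
    also have "\<dots> = (d j p / chi p (j < 2) j p) * chi p (j < 2) j' p'"
      using True orbit_self[of p] by (simp add: chi_eq)
    finally show ?thesis .
  next
    case False
    have 1: "chi p (j < 2) j' p' = 0" using False by (simp only: chi_eq if_False)
    have 2: "Eo d j p j' p' = 0" using False by (simp only: Eo_def if_False)
    show ?thesis using 1 2 by simp
  qed
qed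

lemma Eo_cspan:
  assumes "good d" "inS j p" "p \<noteq> 0"
  shows "Eo d j p \<in> cspan Xi"
  unfolding Eo_chi[OF assms] by (rule cspan_smult[OF cspan_base[OF chi_in_Xi[OF assms(2,3)]]])

lemma restr_cspan:
  assumes g: "good d" and sup: "\<And>j p. d j p \<noteq> 0 \<Longrightarrow> inS j p"
  shows "d \<in> cspan Xi"
proof -
  define Sf where "Sf = {(j, p). inS j p \<and> p \<noteq> 0}"
  have fSf: "finite Sf" unfolding Sf_def by (rule finite_subset[OF _ finite_inS]) auto
  define D where "D = (\<lambda>j' p'. (\<Sum>x\<in>Sf. (1/3) * Eo d (fst x) (snd x) j' p') + (d 0 0 * sqrt Vol) * chi0 j' p')"
  have "D \<in> cspan Xi"
  proof -
    have A: "(\<lambda>j' p'. \<Sum>x\<in>Sf. (1/3) * Eo d (fst x) (snd x) j' p') \<in> cspan Xi"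
    proof (rule cspan_sum[OF fSf])
      fix x assume "x \<in> Sf"
      then have "inS (fst x) (snd x)" "snd x \<noteq> 0" by (auto simp: Sf_def)
      then show "(\<lambda>j' p'. (1/3) * Eo d (fst x) (snd x) j' p') \<in> cspan Xi"
        using cspan_smult[OF Eo_cspan[OF g]] by blast
    qed
    have B: "(\<lambda>j' p'. (d 0 0 * sqrt Vol) * chi0 j' p') \<in> cspan Xi"
      by (rule cspan_smult[OF cspan_base[OF chi0_in_Xi]])
    show ?thesis using cspan_add[OF A B] by (simp add: D_def)
  qed
  moreover have "d = D"
  proof (intro ext)
    fix j' :: nat and p' :: complex
    define T where "T = {x. fst x = j' \<and> p' \<in> orbit (snd x)}"
    have "(\<Sum>x\<in>Sf. (1/3) * Eo d (fst x) (snd x) j' p') = (\<Sum>x\<in>Sf. if x \<in> T then (1/3) * d j' p' else 0)"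
      by (rule sum.cong) (auto simp: Eo_def T_def)
    also have "\<dots> = (\<Sum>x\<in>Sf \<inter> T. (1/3) * d j' p')"
      by (rule sum.inter_restrict[OF fSf, symmetric])
    also have "\<dots> = of_nat (card (Sf \<inter> T)) * ((1/3) * d j' p')" by simp
    finally have sumeq: "(\<Sum>x\<in>Sf. (1/3) * Eo d (fst x) (snd x) j' p') = of_nat (card (Sf \<inter> T)) * ((1/3) * d j' p')" .
    show "d j' p' = D j' p'"
    proof (cases "p' = 0")
      case True
      have "Sf \<inter> T = {}" using True orbit_0 by (auto simp: Sf_def T_def)
      then have s0: "(\<Sum>x\<in>Sf. (1/3) * Eo d (fst x) (snd x) j' p') = 0" using sumeq by simp
      have r: "rotinv d" and fs: "fsupp d" using g by (auto simp: good_def)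
      show ?thesis
      proof (cases "j' = 0")
        case True
        then show ?thesis using s0 \<open>p' = 0\<close> sqrtV by (simp add: D_def chi0_def)
      next
        case False
        have "d j' 0 = 0"
        proof (cases "j' \<ge> 2")
          case True then show ?thesis using rotinv_at0[OF r] by simp
        next
          case False then have "j' = 1" using \<open>j' \<noteq> 0\<close> by simp
          then show ?thesis using fsupp_odd0[OF fs] by simp
        qed
        then show ?thesis using s0 \<open>p' = 0\<close> False by (simp add: D_def chi0_def)
      qed
    next
      case False
      have c0: "chi0 j' p' = 0" using False by (simp add: chi0_def)
      show ?thesis
      proof (cases "d j' p' = 0")
        case True
        then show ?thesis using sumeq c0 by (simp add: D_def)
      next
        case nz: False
        have S: "inS j' p'" by (rule sup[OF nz])
        have "Sf \<inter> T = Pair j' ` orbit p'"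
        proof
          show "Sf \<inter> T \<subseteq> Pair j' ` orbit p'"
            using orbit_sym by (auto simp: Sf_def T_def)
        next
          show "Pair j' ` orbit p' \<subseteq> Sf \<inter> T"
          proof
            fix x assume "x \<in> Pair j' ` orbit p'"
            then obtain q where x: "x = (j', q)" "q \<in> orbit p'" by blast
            have "inS j' q" using inS_orbit[OF x(2)] S by simp
            moreover have "q \<noteq> 0" using x(2) False orbit_sym orbit_0 by blast
            moreover have "p' \<in> orbit q" by (rule orbit_sym[OF x(2)])
            ultimately show "x \<in> Sf \<inter> T" using x(1) by (simp add: Sf_def T_def)
          qed
        qed
        moreover have "card (Pair j' ` orbit p') = 3"
          using card_orbit[OF False] by (simp add: card_image inj_on_def)
        ultimately have "card (Sf \<inter> T) = 3" by simp
        then show ?thesis using sumeq c0 by (simp add: D_def)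
      qed
    qed
  qed
  ultimately show ?thesis by simp
qed

definition restr :: "coeff \<Rightarrow> coeff" where
  "restr c = (\<lambda>j p. if inS j p then c j p else 0)"

lemma good_restr: assumes "rotinv c" "fsupp c" shows "good (restr c)"
proof -
  have "supp (restr c) \<subseteq> {(j, p). inS j p}" by (auto simp: supp_def restr_def split: if_splits)
  then have "finite (supp (restr c))" using finite_inS by (rule finite_subset)
  moreover have "fsupp (restr c)" using assms(2) by (auto simp: fsupp_def restr_def)
  moreover have "rotinv (restr c)" using assms(1) by (auto simp: rotinv_def restr_def inS_rot)
  ultimately show ?thesis by (simp add: good_def)
qed

lemma restr_in_cspan: assumes "rotinv c" "fsupp c" shows "restr c \<in> cspan Xi"
  by (rule restr_cspan[OF good_restr[OF assms]]) (auto simp: restr_def split: if_splits)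

lemma cspan_Xi_supp: "c \<in> cspan Xi \<Longrightarrow> supp c \<subseteq> {(j, p). inS j p}"
  using cspan_Xi_inS by (auto simp: supp_def)

lemma PXi_eq: assumes "rotinv c" "fsupp c" shows "PXi c = restr c"
  unfolding PXi_def
proof (rule orth_proj_unique)
  show "restr c \<in> cspan Xi" by (rule restr_in_cspan[OF assms])
  show "\<forall>e\<in>cspan Xi. inner_K e (c - restr c) = 0"
  proof
    fix e assume e: "e \<in> cspan Xi"
    have "inner_K e (c - restr c) = of_real Vol * (\<Sum>(j, p)\<in>{(j, p). inS j p}. cnj (e j p) * (c - restr c) j p)"
      by (rule inner_fin[OF finite_inS cspan_Xi_supp[OF e]])
    also have "(\<Sum>(j, p)\<in>{(j, p). inS j p}. cnj (e j p) * (c - restr c) j p) = 0"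
      by (rule sum.neutral) (auto simp: restr_def)
    finally show "inner_K e (c - restr c) = 0" by (simp only: mult_zero_right)
  qed
  show "\<And>x y. x \<in> cspan Xi \<Longrightarrow> y \<in> cspan Xi \<Longrightarrow> (\<lambda>j p. x j p - y j p) \<in> cspan Xi"
    by (rule cspan_diff)
  show "\<And>x. x \<in> cspan Xi \<Longrightarrow> finite (supp x)"
    using cspan_Xi_good good_def by blast
qed

lemma cspan_Xi_L2K1: "c \<in> cspan Xi \<Longrightarrow> c \<in> L2K1"
  using cspan_Xi_good good_L2K1 by blast


lemma Psi_inS: assumes "n \<le> 8" "Psi n j q \<noteq> 0" shows "inS j q"
proof (cases "even n")
  case True
  then obtain m where m: "n = 2 * m" by (auto elim: evenE)
  then have m4: "int m \<le> 4" using assms(1) by simp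
  have "SE (int m) (Psi (2 * m))" using Psi_supp by blast
  then obtain a b where "j = 0" "q = Lm a b" "hexd a b \<le> int m"
    using assms(2) m unfolding SE_def by blast
  then show ?thesis using hexE[of a b] m4 inS_Lm by simp
next
  case False
  then obtain m where m: "n = 2 * m + 1" by (metis oddE)
  then have m3: "int m \<le> 3" using assms(1) by simp
  have "SO (int m) (Psi (2 * m + 1))" using Psi_supp by blast
  then obtain a b a0 b0 where ab: "j = 1" "q = Kp a b" "hexd a0 b0 \<le> int m"
     "a = a0 \<and> b = b0 \<or> a = a0 + 1 \<and> b = b0 \<or> a = a0 \<and> b = b0 + 1"
    using assms(2) m unfolding SO_def by blast
  have "So a b" using hexO[of a0 b0] ab(3,4) m3 by auto
  then show ?thesis using ab(1,2) inS_Kp by simp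
qed

lemma good_psi8: "good (psi8 \<alpha>)"
proof -
  have "good (\<lambda>j q. \<Sum>n\<in>{..8}. of_real \<alpha> ^ n * Psi n j q)"
    by (rule good_sum) (auto intro: good_smult good_Psi)
  then show ?thesis by (simp add: psi8_def)
qed

lemma psi8_inS: "psi8 \<alpha> j q \<noteq> 0 \<Longrightarrow> inS j q"
proof -
  assume "psi8 \<alpha> j q \<noteq> 0"
  then have "(\<Sum>n\<in>{..8}. of_real \<alpha> ^ n * Psi n j q) \<noteq> 0" by (simp add: psi8_def)
  then have "\<not> (\<forall>n\<in>{..8}. of_real \<alpha> ^ n * Psi n j q = 0)" by (metis (mono_tags, lifting) sum.neutral)
  then obtain n where "n \<le> 8" "Psi n j q \<noteq> 0" by auto
  then show ?thesis by (rule Psi_inS)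
qed

lemma partC: "psi8 \<alpha> \<in> PXi ` L2K1"
proof -
  have g: "good (psi8 \<alpha>)" by (rule good_psi8)
  have c: "psi8 \<alpha> \<in> cspan Xi" by (rule restr_cspan[OF g psi8_inS])
  have "PXi (psi8 \<alpha>) = restr (psi8 \<alpha>)" using g by (intro PXi_eq) (auto simp: good_def)
  also have "restr (psi8 \<alpha>) = psi8 \<alpha>" using psi8_inS by (auto simp: restr_def fun_eq_iff)
  finally have "psi8 \<alpha> = PXi (psi8 \<alpha>)" by simp
  moreover have "psi8 \<alpha> \<in> L2K1" by (rule good_L2K1[OF g])
  ultimately show ?thesis by blast
qed

definition tau :: "nat \<times> complex \<Rightarrow> nat \<times> complex" where
  "tau x = (if fst x = 0 then 2 else if fst x = 1 then 3 else if fst x = 2 then 0 else if fst x = 3 then 1 else fst x, snd x)"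

lemma tau_tau: "tau (tau x) = x"
  by (cases x) (auto simp: tau_def)

lemma bij_tau: "bij_betw tau UNIV UNIV"
  by (rule bij_betw_byWitness[where f' = tau]) (auto simp: tau_tau)

lemma H0_norm_pt: assumes "fsupp f"
  shows "(cmod (H0 f j p))\<^sup>2 = (\<lambda>(j, p). (cmod p * cmod (f j p))\<^sup>2) (tau (j, p))"
proof -
  have j4: "j \<ge> 4 \<Longrightarrow> f j p = 0" using assms unfolding fsupp_def by (meson leD)
  consider "j = 0" | "j = 1" | "j = 2" | "j = 3" | "j \<ge> 4" by linarith
  then show ?thesis
    by cases (auto simp: H0_def tau_def norm_mult j4)
qed

lemma H0_infsum: assumes "fsupp f"
  shows "(\<Sum>\<^sub>\<infinity>(j, p). (cmod (H0 f j p))\<^sup>2) = (\<Sum>\<^sub>\<infinity>(j, p). (cmod p * cmod (f j p))\<^sup>2)"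
proof -
  have "(\<Sum>\<^sub>\<infinity>(j, p). (cmod (H0 f j p))\<^sup>2) = (\<Sum>\<^sub>\<infinity>x. (\<lambda>(j, p). (cmod p * cmod (f j p))\<^sup>2) (tau x))"
    by (rule infsum_cong) (auto simp: H0_norm_pt[OF assms])
  also have "\<dots> = (\<Sum>\<^sub>\<infinity>(j, p). (cmod p * cmod (f j p))\<^sup>2)"
    by (rule infsum_reindex_bij_betw[OF bij_tau])
  finally show ?thesis .
qed

lemma far: assumes "j < 4" "p \<in> freq j" "\<not> inS j p" shows "(cmod p)\<^sup>2 \<ge> 49"
proof (cases "even j")
  case True
  then obtain a b where p: "p = Lm a b" using assms(2) by (auto simp: freq_alt LamStar_iff)
  have "j = 0 \<or> j = 2" using True assms(1) by presburger
  then have "\<not> Se a b" using assms(3) p inS_Lm by blast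
  then have "a^2 + a*b + b^2 \<ge> 17" by (simp add: Se_def)
  moreover have "\<And>X::int. 17 \<le> X \<Longrightarrow> 49 \<le> 3 * X" by linarith
  ultimately have "3 * (a^2 + a*b + b^2) \<ge> (49::int)" by blast
  then show ?thesis unfolding p Lm_norm by linarith
next
  case False
  then obtain a b where p: "p = Kp a b" using assms(2) by (auto simp: freq_alt Kset_iff)
  have "j = 1 \<or> j = 3" using False assms(1) by presburger
  then have "\<not> So a b" using assms(3) p inS_Kp by blast
  then have "a^2 + a*b + b^2 - a - b \<ge> 16" by (simp add: So_def)
  moreover have "\<And>X::int. 16 \<le> X \<Longrightarrow> 49 \<le> 3 * X + 1" by linarith
  ultimately have "3 * (a^2 + a*b + b^2 - a - b) + 1 \<ge> (49::int)" by blast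
  then show ?thesis unfolding p Kp_norm by linarith
qed

lemma nrm_sq: "nrm c = sqrt (Vol * (\<Sum>\<^sub>\<infinity>(j, p). (cmod (c j p))\<^sup>2))" by (simp add: nrm_def)

lemma partA:
  assumes f: "f \<in> domH0" and P: "PXi f = (\<lambda>j p. 0)"
  shows "nrm (H0 f) \<ge> 7 * nrm f"
proof -
  have fL: "f \<in> L2K1" using f by (simp add: domH0_def)
  have r: "rotinv f" and fs: "fsupp f" using L2K1_rotinv[OF fL] L2K1_fsupp[OF fL] by auto
  have "restr f = (\<lambda>j p. 0)" using P PXi_eq[OF r fs] by simp
  then have z: "\<And>j p. inS j p \<Longrightarrow> f j p = 0" by (metis restr_def)
  have sA: "(\<lambda>(j, p). (cmod (f j p))\<^sup>2) summable_on UNIV" using fL by (simp add: L2K1_def L2K_def)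
  have sB: "(\<lambda>(j, p). (cmod p * cmod (f j p))\<^sup>2) summable_on UNIV" using f by (simp add: domH0_def)
  have "(\<Sum>\<^sub>\<infinity>(j, p). (cmod p * cmod (f j p))\<^sup>2) \<ge> (\<Sum>\<^sub>\<infinity>x. 49 * (\<lambda>(j, p). (cmod (f j p))\<^sup>2) x)"
  proof (rule infsum_mono)
    show "(\<lambda>x. 49 * (\<lambda>(j, p). (cmod (f j p))\<^sup>2) x) summable_on UNIV" by (rule summable_on_cmult_right[OF sA])
    show "(\<lambda>(j, p). (cmod p * cmod (f j p))\<^sup>2) summable_on UNIV" by (rule sB)
    fix x :: "nat \<times> complex"
    obtain j p where x: "x = (j, p)" by fastforce
    show "49 * (\<lambda>(j, p). (cmod (f j p))\<^sup>2) x \<le> (\<lambda>(j, p). (cmod p * cmod (f j p))\<^sup>2) x"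
    proof (cases "f j p = 0")
      case True then show ?thesis using x by simp
    next
      case False
      then have "j < 4" "p \<in> freq j" using fs unfolding fsupp_def by auto
      moreover have "\<not> inS j p" using z False by blast
      ultimately have "(cmod p)\<^sup>2 \<ge> 49" by (rule far)
      then have "49 * (cmod (f j p))\<^sup>2 \<le> (cmod p)\<^sup>2 * (cmod (f j p))\<^sup>2"
        by (simp add: mult_right_mono)
      then show ?thesis using x by (simp add: power_mult_distrib)
    qed
  qed
  also have "(\<Sum>\<^sub>\<infinity>x. 49 * (\<lambda>(j, p). (cmod (f j p))\<^sup>2) x) = 49 * (\<Sum>\<^sub>\<infinity>(j, p). (cmod (f j p))\<^sup>2)"
    by (rule infsum_cmult_right) (use sA in simp)
  finally have ineq: "49 * (\<Sum>\<^sub>\<infinity>(j, p). (cmod (f j p))\<^sup>2) \<le> (\<Sum>\<^sub>\<infinity>(j, p). (cmod (H0 f j p))\<^sup>2)"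
    using H0_infsum[OF fs] by simp
  have "7 * nrm f = sqrt (49 * (Vol * (\<Sum>\<^sub>\<infinity>(j, p). (cmod (f j p))\<^sup>2)))"
    by (simp add: nrm_def real_sqrt_mult)
  also have "\<dots> \<le> sqrt (Vol * (\<Sum>\<^sub>\<infinity>(j, p). (cmod (H0 f j p))\<^sup>2))"
    using ineq Vol_pos by (intro real_sqrt_le_mono) (simp add: algebra_simps)
  finally show ?thesis by (simp add: nrm_def)
qed


definition oK :: complex where "oK = Kp (-2) (-2)"
definition f0 :: coeff where "f0 = chi oK True"

lemma oK_K: "oK \<in> Kset" by (auto simp: oK_def Kset_iff)
lemma oK_nz: "oK \<noteq> 0" using oK_K zero_notin_Kset by auto
lemma orbit_oK: "orbit oK = {Kp (-2) (-2), Kp (-2) 5, Kp 5 (-2)}"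
  by (simp add: oK_def orbit_Kp)
lemma chi_comp_oK: "chi_comp oK s = (if s then 1 else 3)"
  using oK_K LK_cases by (auto simp: chi_comp_def)

lemma f0_val: "f0 j q = (if j = 1 \<and> q \<in> orbit oK then kV else 0)"
  by (simp add: f0_def chi_alt chi_comp_oK)

lemma good_f0: "good f0" unfolding f0_def by (rule good_chi) (use oK_K in simp)

lemma orbit_oK_out: "q \<in> orbit oK \<Longrightarrow> \<not> inS j q"
  by (auto simp: orbit_oK inS_Kp So_def Ext6_def)

lemma orbit_oK_norm: "q \<in> orbit oK \<Longrightarrow> (cmod q)\<^sup>2 = 49"
  by (auto simp: orbit_oK Kp_norm)

lemma restr_f0: "restr f0 = (\<lambda>j p. 0)"
  using orbit_oK_out by (auto simp: restr_def f0_val fun_eq_iff)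

lemma PXi_f0: "PXi f0 = (\<lambda>j p. 0)"
  using PXi_eq[of f0] good_f0 restr_f0 by (auto simp: good_def)

lemma kV_sq: "(cmod kV)\<^sup>2 = 1 / (3 * Vol)"
proof -
  have "cmod kV = 1 / sqrt (3 * Vol)" unfolding kV_def norm_of_real using Vol_pos by simp
  then show ?thesis using Vol_pos by (simp add: power_divide)
qed

lemma f0_supp: "supp f0 \<subseteq> Pair 1 ` orbit oK"
  by (auto simp: supp_def f0_val split: if_splits)

lemma f0_sum: "(\<Sum>\<^sub>\<infinity>(j, p). (cmod (f0 j p))\<^sup>2) = 1 / Vol"
proof -
  have "(\<Sum>\<^sub>\<infinity>(j, p). (cmod (f0 j p))\<^sup>2) = (\<Sum>(j, p)\<in>Pair 1 ` orbit oK. (cmod (f0 j p))\<^sup>2)"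
    by (rule infsum_fin) (use finite_orbit supp_outside[OF f0_supp] in auto)
  also have "\<dots> = (\<Sum>q\<in>orbit oK. (cmod (f0 1 q))\<^sup>2)"
    by (subst sum.reindex) (auto simp: inj_on_def)
  also have "\<dots> = (\<Sum>q\<in>orbit oK. 1 / (3 * Vol))"
    by (rule sum.cong) (auto simp: f0_val kV_sq)
  also have "\<dots> = 1 / Vol" using card_orbit[OF oK_nz] by simp
  finally show ?thesis .
qed

lemma nrm_f0: "nrm f0 = 1"
  using f0_sum Vol_pos by (simp add: nrm_def)

lemma H0_f0: "nrm (H0 f0) = 7"
proof -
  have fs: "fsupp f0" using good_f0 by (simp add: good_def)
  have "(\<Sum>\<^sub>\<infinity>(j, p). (cmod (H0 f0 j p))\<^sup>2) = (\<Sum>\<^sub>\<infinity>(j, p). (cmod p * cmod (f0 j p))\<^sup>2)"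
    by (rule H0_infsum[OF fs])
  also have "\<dots> = (\<Sum>\<^sub>\<infinity>x. 49 * (\<lambda>(j, p). (cmod (f0 j p))\<^sup>2) x)"
  proof (rule infsum_cong)
    fix x :: "nat \<times> complex"
    obtain j p where x: "x = (j, p)" by fastforce
    show "(\<lambda>(j, p). (cmod p * cmod (f0 j p))\<^sup>2) x = 49 * (\<lambda>(j, p). (cmod (f0 j p))\<^sup>2) x"
    proof (cases "f0 j p = 0")
      case True then show ?thesis using x by simp
    next
      case False
      then have "p \<in> orbit oK" by (auto simp: f0_val split: if_splits)
      then have "(cmod p)\<^sup>2 = 49" by (rule orbit_oK_norm)
      then show ?thesis using x by (simp add: power_mult_distrib)
    qed
  qed
  also have "\<dots> = 49 * (\<Sum>\<^sub>\<infinity>(j, p). (cmod (f0 j p))\<^sup>2)"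
  proof (rule infsum_cmult_right)
    have "finite (supp f0)" using good_f0 by (simp add: good_def)
    then show "(\<lambda>(j, p). (cmod (f0 j p))\<^sup>2) summable_on UNIV"
      by (rule summable_fin) (use supp_outside[OF subset_refl] in auto)
  qed
  finally have "(\<Sum>\<^sub>\<infinity>(j, p). (cmod (H0 f0 j p))\<^sup>2) = 49 / Vol" using f0_sum by simp
  then have "nrm (H0 f0) = sqrt 49" using Vol_pos by (simp add: nrm_def)
  then show ?thesis by simp
qed

lemma partB:
  assumes "\<forall>f\<in>domH0. PXi f = (\<lambda>j p. 0) \<longrightarrow> nrm (H0 f) \<ge> C * nrm f"
  shows "C \<le> 7"
proof -
  have "f0 \<in> domH0" by (rule good_domH0[OF good_f0])
  then have "nrm (H0 f0) \<ge> C * nrm f0" using assms PXi_f0 by blast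
  then show ?thesis using H0_f0 nrm_f0 by simp
qed


definition ek :: "nat \<Rightarrow> int \<times> int" where
  "ek k = (if k = 0 then (0, 0) else if k = 1 then (1, 0) else (0, 1))"

lemma Lm_plus_ek: "k < 3 \<Longrightarrow> Lm a b + qv k = Kp (a + fst (ek k)) (b + snd (ek k))"
  using k3_cases[of k] Lm_q0 Lm_q1 Lm_q2 by (auto simp: ek_def)
lemma Kp_minus_ek: "k < 3 \<Longrightarrow> Kp a b - qv k = Lm (a - fst (ek k)) (b - snd (ek k))"
  using k3_cases[of k] Kp_q0 Kp_q1 Kp_q2 by (auto simp: ek_def)

definition nbx :: "nat \<times> complex \<Rightarrow> nat \<Rightarrow> nat \<times> complex" where
  "nbx x k = (3 - fst x, if even (fst x) then snd x + qv k else snd x - qv k)"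

definition cf :: "nat \<Rightarrow> nat \<Rightarrow> complex" where
  "cf j k = (if j < 2 then cnj (wv k) else wv k)"

lemma cf_norm: "k < 3 \<Longrightarrow> cmod (cf j k) = 1"
  using k3_cases[of k] by (auto simp: cf_def wv_def numeral_2_eq_2)

lemma H1_nbx: "j < 4 \<Longrightarrow> H1 c j p = (\<Sum>k<3. cf j k * c (fst (nbx (j, p) k)) (snd (nbx (j, p) k)))"
proof -
  assume "j < 4"
  then consider "j = 0" | "j = 1" | "j = 2" | "j = 3" by linarith
  then show ?thesis by cases (simp_all add: H1_def nbx_def cf_def)
qed

lemma ek_cases: "k < 3 \<Longrightarrow> ek k = (0,0) \<or> ek k = (1,0) \<or> ek k = (0,1)"
  using k3_cases[of k] by (auto simp: ek_def)

lemma ek_inj: "k < 3 \<Longrightarrow> k' < 3 \<Longrightarrow> ek k = ek k' \<Longrightarrow> k = k'"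
  using k3_cases[of k] k3_cases[of k'] by (auto simp: ek_def)

lemma claimU:
  assumes S: "inS j p" and k: "k < 3" "k' < 3"
    and o1: "\<not> inS (fst (nbx (j, p) k)) (snd (nbx (j, p) k))"
    and o2: "\<not> inS (fst (nbx (j, p) k')) (snd (nbx (j, p) k'))"
  shows "k = k'"
proof -
  from inS_cases[OF S] show ?thesis
  proof
    assume "\<exists>a b. p = Lm a b \<and> (j = 0 \<or> j = 2) \<and> Se a b"
    then obtain a b where p: "p = Lm a b" and j: "j = 0 \<or> j = 2" and se: "Se a b" by blast
    have ev: "even j" "3 - j = 1 \<or> 3 - j = 3" using j by auto
    have n1: "\<not> So (a + fst (ek k)) (b + snd (ek k))"
      using o1 ev unfolding nbx_def by (auto simp: p Lm_plus_ek[OF k(1)] inS_Kp)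
    have n2: "\<not> So (a + fst (ek k')) (b + snd (ek k'))"
      using o2 ev unfolding nbx_def by (auto simp: p Lm_plus_ek[OF k(2)] inS_Kp)
    have "ek k = ek k'" using C1[OF se] n1 n2 ek_cases[OF k(1)] ek_cases[OF k(2)] by auto
    then show ?thesis using ek_inj k by blast
  next
    assume "\<exists>a b. p = Kp a b \<and> (j = 1 \<or> j = 3) \<and> So a b"
    then obtain a b where p: "p = Kp a b" and j: "j = 1 \<or> j = 3" and so: "So a b" by blast
    have ev: "odd j" "3 - j = 0 \<or> 3 - j = 2" using j by auto
    have n1: "\<not> Se (a - fst (ek k)) (b - snd (ek k))"
      using o1 ev unfolding nbx_def by (auto simp: p Kp_minus_ek[OF k(1)] inS_Lm)
    have n2: "\<not> Se (a - fst (ek k')) (b - snd (ek k'))"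
      using o2 ev unfolding nbx_def by (auto simp: p Kp_minus_ek[OF k(2)] inS_Lm)
    have "ek k = ek k'" using C2[OF so] n1 n2 ek_cases[OF k(1)] ek_cases[OF k(2)] by auto
    then show ?thesis using ek_inj k by blast
  qed
qed

lemma claimV:
  assumes S: "inS j p" and S2: "inS j2 p2" and k: "k < 3" "k2 < 3"
    and o1: "\<not> inS (fst (nbx (j, p) k)) (snd (nbx (j, p) k))"
    and eq: "nbx (j, p) k = nbx (j2, p2) k2"
  shows "j = j2 \<and> p = p2 \<and> k = k2"
proof -
  have j4: "j < 4" "j2 < 4" using inS_imp[OF S] inS_imp[OF S2] by auto
  have "3 - j = 3 - j2" using eq unfolding nbx_def by simp
  then have jj: "j = j2" using j4 by arith
  from inS_cases[OF S] show ?thesis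
  proof
    assume "\<exists>a b. p = Lm a b \<and> (j = 0 \<or> j = 2) \<and> Se a b"
    then obtain a b where p: "p = Lm a b" and j: "j = 0 \<or> j = 2" and se: "Se a b" by blast
    have ev: "even j" "3 - j = 1 \<or> 3 - j = 3" using j by auto
    have "p2 \<in> LamStar" using S2 jj j by (auto simp: inS_def)
    then obtain a2 b2 where p2: "p2 = Lm a2 b2" by (auto simp: LamStar_iff)
    have se2: "Se a2 b2" using S2 jj j p2 inS_Lm by simp
    define c where "c = a + fst (ek k)"
    define d where "d = b + snd (ek k)"
    have n1: "\<not> So c d"
      using o1 ev unfolding nbx_def by (auto simp: p Lm_plus_ek[OF k(1)] inS_Kp c_def d_def)
    have "Kp c d = Kp (a2 + fst (ek k2)) (b2 + snd (ek k2))"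
      using eq ev jj unfolding nbx_def by (auto simp add: p p2 Lm_plus_ek[OF k(1)] Lm_plus_ek[OF k(2)] c_def d_def)
    then have cd: "c = a2 + fst (ek k2)" "d = b2 + snd (ek k2)" by (simp_all add: Kp_inj)
    have A: "Se (c - fst (ek k)) (d - snd (ek k))" using se by (simp add: c_def d_def)
    have B: "Se (c - fst (ek k2)) (d - snd (ek k2))" using se2 by (simp add: cd)
    have "ek k = ek k2" using C3[OF n1] A B ek_cases[OF k(1)] ek_cases[OF k(2)] by auto
    then have kk: "k = k2" using ek_inj k by blast
    then have "a = a2" "b = b2" using cd by (simp_all add: c_def d_def)
    then show ?thesis using jj kk p p2 by simp
  next
    assume "\<exists>a b. p = Kp a b \<and> (j = 1 \<or> j = 3) \<and> So a b"
    then obtain a b where p: "p = Kp a b" and j: "j = 1 \<or> j = 3" and so: "So a b" by blast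
    have ev: "odd j" "3 - j = 0 \<or> 3 - j = 2" using j by auto
    have "p2 \<in> Kset" using S2 jj j by (auto simp: inS_def)
    then obtain a2 b2 where p2: "p2 = Kp a2 b2" by (auto simp: Kset_iff)
    have so2: "So a2 b2" using S2 jj j p2 inS_Kp by simp
    define c where "c = a - fst (ek k)"
    define d where "d = b - snd (ek k)"
    have n1: "\<not> Se c d"
      using o1 ev unfolding nbx_def by (auto simp: p Kp_minus_ek[OF k(1)] inS_Lm c_def d_def)
    have "Lm c d = Lm (a2 - fst (ek k2)) (b2 - snd (ek k2))"
      using eq ev jj unfolding nbx_def by (auto simp add: p p2 Kp_minus_ek[OF k(1)] Kp_minus_ek[OF k(2)] c_def d_def)
    then have cd: "c = a2 - fst (ek k2)" "d = b2 - snd (ek k2)" by (simp_all add: Lm_inj)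
    have A: "So (c + fst (ek k)) (d + snd (ek k))" using so by (simp add: c_def d_def)
    have B: "So (c + fst (ek k2)) (d + snd (ek k2))" using so2 by (simp add: cd)
    have "ek k = ek k2" using C4[OF n1] A B ek_cases[OF k(1)] ek_cases[OF k(2)] by auto
    then have kk: "k = k2" using ek_inj k by blast
    then have "a = a2" "b = b2" using cd by (simp_all add: c_def d_def)
    then show ?thesis using jj kk p p2 by simp
  qed
qed


definition cutS :: "coeff \<Rightarrow> coeff" where
  "cutS f = (\<lambda>j p. if inS j p then 0 else f j p)"

lemma PXi_perp_eq: assumes "rotinv f" "fsupp f" shows "PXi_perp f = cutS f"
  unfolding PXi_perp_def PXi_eq[OF assms] by (auto simp: cutS_def restr_def fun_eq_iff)

lemma rotinv_cut: "rotinv f \<Longrightarrow> rotinv (cutS f)"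
  by (auto simp: rotinv_def cutS_def inS_rot)
lemma fsupp_cut: "fsupp f \<Longrightarrow> fsupp (cutS f)"
  by (auto simp: fsupp_def cutS_def)

definition SS :: "(nat \<times> complex) set" where "SS = {(j, p). inS j p}"
definition outk :: "nat \<times> complex \<Rightarrow> nat set" where
  "outk x = {k. k < 3 \<and> \<not> inS (fst (nbx x k)) (snd (nbx x k))}"
definition Sig :: "((nat \<times> complex) \<times> nat) set" where "Sig = Sigma SS outk"
definition nbz :: "(nat \<times> complex) \<times> nat \<Rightarrow> nat \<times> complex" where "nbz z = nbx (fst z) (snd z)"

lemma finite_SS: "finite SS" using finite_inS by (simp add: SS_def)
lemma finite_Sig: "finite Sig"
  unfolding Sig_def by (rule finite_SigmaI[OF finite_SS]) (auto simp: outk_def)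

lemma inj_nbz: "inj_on nbz Sig"
proof (rule inj_onI)
  fix z z' assume z: "z \<in> Sig" and z': "z' \<in> Sig" and eq: "nbz z = nbz z'"
  obtain j p k where zz: "z = ((j, p), k)" by (metis prod.collapse)
  obtain j2 p2 k2 where zz': "z' = ((j2, p2), k2)" by (metis prod.collapse)
  have S: "inS j p" "k < 3" "\<not> inS (fst (nbx (j, p) k)) (snd (nbx (j, p) k))"
    using z zz by (auto simp: Sig_def SS_def outk_def)
  have S2: "inS j2 p2" "k2 < 3" using z' zz' by (auto simp: Sig_def SS_def outk_def)
  have "nbx (j, p) k = nbx (j2, p2) k2" using eq zz zz' by (simp add: nbz_def)
  from claimV[OF S(1) S2(1) S(2) S2(2) S(3) this] show "z = z'" using zz zz' by simp
qed

lemma outk_cases: assumes "x \<in> SS" shows "outk x = {} \<or> (\<exists>k0. outk x = {k0})"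
proof (cases "outk x = {}")
  case False
  then obtain k0 where k0: "k0 \<in> outk x" by blast
  obtain j p where x: "x = (j, p)" by fastforce
  have "outk x = {k0}"
  proof
    show "outk x \<subseteq> {k0}"
    proof
      fix k assume "k \<in> outk x"
      then show "k \<in> {k0}" using claimU[of j p k k0] k0 assms x by (auto simp: outk_def SS_def)
    qed
  qed (use k0 in simp)
  then show ?thesis by blast
qed simp

lemma h_pt:
  assumes x: "x \<in> SS"
  shows "(cmod (H1 (cutS f) (fst x) (snd x)))\<^sup>2 = (\<Sum>k\<in>outk x. (cmod (cutS f (fst (nbx x k)) (snd (nbx x k))))\<^sup>2)"
proof -
  obtain j p where xx: "x = (j, p)" by fastforce
  have j4: "j < 4" using x xx inS_imp by (auto simp: SS_def)
  have "H1 (cutS f) j p = (\<Sum>k<3. cf j k * cutS f (fst (nbx (j, p) k)) (snd (nbx (j, p) k)))"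
    by (rule H1_nbx[OF j4])
  also have "\<dots> = (\<Sum>k\<in>outk x. cf j k * cutS f (fst (nbx (j, p) k)) (snd (nbx (j, p) k)))"
    by (rule sum.mono_neutral_right) (auto simp: outk_def cutS_def xx)
  finally have hx: "H1 (cutS f) j p = (\<Sum>k\<in>outk x. cf j k * cutS f (fst (nbx x k)) (snd (nbx x k)))"
    using xx by simp
  from outk_cases[OF x] show ?thesis
  proof
    assume "outk x = {}" then show ?thesis using hx xx by simp
  next
    assume "\<exists>k0. outk x = {k0}"
    then obtain k0 where k0: "outk x = {k0}" by blast
    then have "k0 < 3" by (auto simp: outk_def)
    then have "cmod (cf j k0) = 1" by (rule cf_norm)
    then show ?thesis using hx xx k0 by (simp add: norm_mult)
  qed
qed

lemma sum_h:
  "(\<Sum>x\<in>SS. (cmod (H1 (cutS f) (fst x) (snd x)))\<^sup>2) = (\<Sum>y\<in>nbz ` Sig. (cmod (cutS f (fst y) (snd y)))\<^sup>2)"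
proof -
  have "(\<Sum>x\<in>SS. (cmod (H1 (cutS f) (fst x) (snd x)))\<^sup>2)
      = (\<Sum>x\<in>SS. \<Sum>k\<in>outk x. (cmod (cutS f (fst (nbx x k)) (snd (nbx x k))))\<^sup>2)"
    by (rule sum.cong) (auto simp: h_pt)
  also have "\<dots> = (\<Sum>z\<in>Sig. (cmod (cutS f (fst (nbz z)) (snd (nbz z))))\<^sup>2)"
  proof -
    have fin: "\<forall>x\<in>SS. finite (outk x)" by (auto simp: outk_def)
    show ?thesis unfolding Sig_def nbz_def
      by (subst sum.Sigma[OF finite_SS fin]) (simp add: case_prod_unfold)
  qed
  also have "\<dots> = (\<Sum>y\<in>nbz ` Sig. (cmod (cutS f (fst y) (snd y)))\<^sup>2)"
    by (rule sum.reindex[OF inj_nbz, symmetric, unfolded o_def])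
  finally show ?thesis .
qed

lemma supp_restr: "supp (restr c) \<subseteq> SS"
  by (auto simp: supp_def restr_def SS_def split: if_splits)

lemma T_eq:
  assumes f: "f \<in> L2K1"
  shows "nrm (PXi (H1 (PXi_perp f))) = sqrt (Vol * (\<Sum>y\<in>nbz ` Sig. (cmod (cutS f (fst y) (snd y)))\<^sup>2))"
proof -
  have r: "rotinv f" and fs: "fsupp f" using L2K1_rotinv[OF f] L2K1_fsupp[OF f] by auto
  have pp: "PXi_perp f = cutS f" by (rule PXi_perp_eq[OF r fs])
  have rh: "rotinv (H1 (cutS f))" by (rule rotinv_H1[OF rotinv_cut[OF r]])
  have fh: "fsupp (H1 (cutS f))" by (rule fsupp_H1[OF fsupp_cut[OF fs]])
  have "PXi (H1 (PXi_perp f)) = restr (H1 (cutS f))" using pp PXi_eq[OF rh fh] by simp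
  then have "nrm (PXi (H1 (PXi_perp f))) = sqrt (Vol * (\<Sum>(j, p)\<in>SS. (cmod (restr (H1 (cutS f)) j p))\<^sup>2))"
    using nrm_fin[OF finite_SS supp_restr] by simp
  also have "(\<Sum>(j, p)\<in>SS. (cmod (restr (H1 (cutS f)) j p))\<^sup>2) = (\<Sum>x\<in>SS. (cmod (H1 (cutS f) (fst x) (snd x)))\<^sup>2)"
    by (rule sum.cong) (auto simp: restr_def SS_def)
  also have "\<dots> = (\<Sum>y\<in>nbz ` Sig. (cmod (cutS f (fst y) (snd y)))\<^sup>2)" by (rule sum_h)
  finally show ?thesis .
qed

lemma T_le:
  assumes f: "f \<in> L2K1"
  shows "nrm (PXi (H1 (PXi_perp f))) \<le> nrm f"
proof -
  have sA: "(\<lambda>(j, p). (cmod (f j p))\<^sup>2) summable_on UNIV" using f by (simp add: L2K1_def L2K_def)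
  have fY: "finite (nbz ` Sig)" using finite_Sig by simp
  have "(\<Sum>y\<in>nbz ` Sig. (cmod (cutS f (fst y) (snd y)))\<^sup>2) \<le> (\<Sum>y\<in>nbz ` Sig. (\<lambda>(j, p). (cmod (f j p))\<^sup>2) y)"
  proof (rule sum_mono)
    fix y :: "nat \<times> complex"
    show "(cmod (cutS f (fst y) (snd y)))\<^sup>2 \<le> (\<lambda>(j, p). (cmod (f j p))\<^sup>2) y"
      by (simp add: cutS_def case_prod_unfold)
  qed
  also have "\<dots> = infsum (\<lambda>(j, p). (cmod (f j p))\<^sup>2) (nbz ` Sig)" using fY by simp
  also have "\<dots> \<le> (\<Sum>\<^sub>\<infinity>(j, p). (cmod (f j p))\<^sup>2)"
  proof (rule infsum_mono_neutral)
    show "(\<lambda>(j, p). (cmod (f j p))\<^sup>2) summable_on nbz ` Sig" using fY by (rule summable_on_finite)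
    show "(\<lambda>(j, p). (cmod (f j p))\<^sup>2) summable_on UNIV" by (rule sA)
    show "\<And>x. x \<in> nbz ` Sig \<inter> UNIV \<Longrightarrow> (\<lambda>(j, p). (cmod (f j p))\<^sup>2) x \<le> (\<lambda>(j, p). (cmod (f j p))\<^sup>2) x"
      by (rule order_refl)
    show "\<And>x. x \<in> nbz ` Sig - UNIV \<Longrightarrow> (\<lambda>(j, p). (cmod (f j p))\<^sup>2) x \<le> 0" by blast
    show "\<And>x. x \<in> UNIV - nbz ` Sig \<Longrightarrow> (\<lambda>(j, p). (cmod (f j p))\<^sup>2) x \<ge> 0"
      by (simp add: case_prod_unfold)
  qed
  finally have "(\<Sum>y\<in>nbz ` Sig. (cmod (cutS f (fst y) (snd y)))\<^sup>2) \<le> (\<Sum>\<^sub>\<infinity>(j, p). (cmod (f j p))\<^sup>2)" .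
  then have le: "sqrt (Vol * (\<Sum>y\<in>nbz ` Sig. (cmod (cutS f (fst y) (snd y)))\<^sup>2)) \<le> sqrt (Vol * (\<Sum>\<^sub>\<infinity>(j, p). (cmod (f j p))\<^sup>2))"
    using Vol_pos by (intro real_sqrt_le_mono mult_left_mono) auto
  show ?thesis unfolding T_eq[OF f] nrm_def[of f] by (rule le)
qed

lemma oK_witness: "q \<in> orbit oK \<Longrightarrow> (1, q) \<in> nbz ` Sig"
proof -
  assume q: "q \<in> orbit oK"
  have W: "\<And>a b k. k < 3 \<Longrightarrow> Se a b \<Longrightarrow> Lm a b + qv k \<in> orbit oK \<Longrightarrow> (1, Lm a b + qv k) \<in> nbz ` Sig"
  proof -
    fix a b k assume k: "(k::nat) < 3" and se: "Se a b" and o: "Lm a b + qv k \<in> orbit oK"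
    have "((2, Lm a b), k) \<in> Sig" using k se orbit_oK_out[OF o] inS_Lm
      by (simp add: Sig_def SS_def outk_def nbx_def)
    moreover have "nbz ((2, Lm a b), k) = (1, Lm a b + qv k)" by (simp add: nbz_def nbx_def)
    ultimately show "(1, Lm a b + qv k) \<in> nbz ` Sig" by (metis image_eqI)
  qed
  have e1: "Lm (-2) (-2) + qv 0 = Kp (-2) (-2)" using Lm_plus_ek[of 0 "-2" "-2"] by (simp add: ek_def)
  have e2: "Lm (-2) 4 + qv 2 = Kp (-2) 5" using Lm_plus_ek[of 2 "-2" 4] by (simp add: ek_def)
  have e3: "Lm 4 (-2) + qv 1 = Kp 5 (-2)" using Lm_plus_ek[of 1 4 "-2"] by (simp add: ek_def)
  have o1: "Kp (-2) (-2) \<in> orbit oK" "Kp (-2) 5 \<in> orbit oK" "Kp 5 (-2) \<in> orbit oK" by (simp_all add: orbit_oK)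
  from q consider "q = Kp (-2) (-2)" | "q = Kp (-2) 5" | "q = Kp 5 (-2)" by (auto simp: orbit_oK)
  then show ?thesis
  proof cases
    case 1
    have "(1, Lm (-2) (-2) + qv 0) \<in> nbz ` Sig"
    proof (rule W)
      show "(0::nat) < 3" by simp
      show "Se (-2) (-2)" by (simp add: Se_def)
      show "Lm (-2) (-2) + qv 0 \<in> orbit oK" unfolding e1 by (rule o1(1))
    qed
    then show ?thesis using 1 e1 by simp
  next
    case 2
    have "(1, Lm (-2) 4 + qv 2) \<in> nbz ` Sig"
    proof (rule W)
      show "(2::nat) < 3" by simp
      show "Se (-2) 4" by (simp add: Se_def)
      show "Lm (-2) 4 + qv 2 \<in> orbit oK" unfolding e2 by (rule o1(2))
    qed
    then show ?thesis using 2 e2 by simp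
  next
    case 3
    have "(1, Lm 4 (-2) + qv 1) \<in> nbz ` Sig"
    proof (rule W)
      show "(1::nat) < 3" by simp
      show "Se 4 (-2)" by (simp add: Se_def)
      show "Lm 4 (-2) + qv 1 \<in> orbit oK" unfolding e3 by (rule o1(3))
    qed
    then show ?thesis using 3 e3 by simp
  qed
qed

lemma T_f0: "nrm (PXi (H1 (PXi_perp f0))) = 1"
proof -
  have fL: "f0 \<in> L2K1" by (rule good_L2K1[OF good_f0])
  have cf0: "cutS f0 = f0"
  proof (intro ext)
    fix j p show "cutS f0 j p = f0 j p"
      using orbit_oK_out[of p 1] orbit_oK_out[of p "Suc 0"] by (auto simp: cutS_def f0_val)
  qed
  have sub: "supp f0 \<subseteq> nbz ` Sig"
  proof
    fix x assume "x \<in> supp f0"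
    then obtain q where "x = (1, q)" "q \<in> orbit oK" using f0_supp by blast
    then show "x \<in> nbz ` Sig" using oK_witness by simp
  qed
  have fY: "finite (nbz ` Sig)" using finite_Sig by simp
  have "(\<Sum>y\<in>nbz ` Sig. (cmod (cutS f0 (fst y) (snd y)))\<^sup>2) = (\<Sum>(j, p)\<in>nbz ` Sig. (cmod (f0 j p))\<^sup>2)"
    by (simp only: cf0 case_prod_unfold)
  also have "\<dots> = (\<Sum>\<^sub>\<infinity>(j, p). (cmod (f0 j p))\<^sup>2)"
  proof (rule infsum_fin[symmetric, OF fY])
    fix x assume "x \<notin> nbz ` Sig"
    then show "(\<lambda>(j, p). (cmod (f0 j p))\<^sup>2) x = 0"
      using supp_outside[OF sub] by (cases x) simp
  qed
  also have "\<dots> = 1 / Vol" by (rule f0_sum)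
  finally have e: "(\<Sum>y\<in>nbz ` Sig. (cmod (cutS f0 (fst y) (snd y)))\<^sup>2) = 1 / Vol" .
  show ?thesis unfolding T_eq[OF fL] e using Vol_pos by simp
qed

lemma partD: "opnorm (\<lambda>f. PXi (H1 (PXi_perp f))) = 1"
proof -
  let ?A = "{f \<in> L2K1. nrm f \<le> 1}"
  have "(SUP f\<in>?A. ereal (nrm (PXi (H1 (PXi_perp f))))) \<le> 1"
  proof (rule SUP_least)
    fix f assume fA: "f \<in> ?A"
    then have "f \<in> L2K1" "nrm f \<le> 1" by auto
    then have "nrm (PXi (H1 (PXi_perp f))) \<le> 1" using T_le[of f] by linarith
    then show "ereal (nrm (PXi (H1 (PXi_perp f)))) \<le> 1" by simp
  qed
  moreover have "1 \<le> (SUP f\<in>?A. ereal (nrm (PXi (H1 (PXi_perp f)))))"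
  proof (rule SUP_upper2)
    show "f0 \<in> ?A" using good_L2K1[OF good_f0] nrm_f0 by simp
    show "1 \<le> ereal (nrm (PXi (H1 (PXi_perp f0))))" using T_f0 by simp
  qed
  ultimately show ?thesis unfolding opnorm_def by (rule antisym)
qed



lemma infsum_of_real_pairs:
  assumes "G summable_on UNIV"
  shows "(\<Sum>\<^sub>\<infinity>x. complex_of_real (G x)) = complex_of_real (\<Sum>\<^sub>\<infinity>x. G x)"
proof -
  have "infsum (complex_of_real \<circ> G) UNIV = complex_of_real (infsum G UNIV)"
  proof (rule infsum_comm_additive)
    show "Modules.additive complex_of_real" by (rule Modules.additive.intro) simp
    show "isCont complex_of_real (infsum G UNIV)" by simp
    show "G summable_on UNIV" by (rule assms)
  qed
  then show ?thesis by (simp add: o_def)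
qed

lemma Q_contr:
  assumes Q: "is_orth_proj Q" and xL: "x \<in> L2K1" and fx: "finite (supp x)"
  shows "nrm (Q x) \<le> nrm x"
proof -
  define y where "y = Q x"
  have yL: "y \<in> L2K1" using Q xL by (simp add: is_orth_proj_def y_def)
  have Qy: "Q y = y" using Q xL by (simp add: is_orth_proj_def y_def)
  have sa: "inner_K (Q x) y = inner_K x (Q y)" using Q xL yL by (simp add: is_orth_proj_def)
  then have iyy: "inner_K y y = inner_K x y" using Qy by (simp add: y_def)
  define F where "F = supp x"
  have fF: "finite F" using fx by (simp add: F_def)
  define G where "G = (\<lambda>(j, p). (cmod (y j p))\<^sup>2)"
  have sG: "G summable_on UNIV" using yL by (simp add: L2K1_def L2K_def G_def)
  define Yv where "Yv = (\<Sum>\<^sub>\<infinity>z. G z)"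
  have Yv0: "Yv \<ge> 0" unfolding Yv_def G_def by (rule infsum_nonneg) (auto simp: case_prod_unfold)
  have "inner_K y y = of_real Vol * (\<Sum>\<^sub>\<infinity>z. complex_of_real (G z))"
  proof -
    have "(\<lambda>(j, p). cnj (y j p) * y j p) = (\<lambda>z. complex_of_real (G z))"
    proof (intro ext)
      fix z :: "nat \<times> complex"
      obtain j p where z: "z = (j, p)" by fastforce
      have "cnj (y j p) * y j p = complex_of_real ((cmod (y j p))\<^sup>2)"
        by (subst complex_norm_square) (rule mult.commute)
      then show "(\<lambda>(j, p). cnj (y j p) * y j p) z = complex_of_real (G z)" by (simp add: z G_def)
    qed
    then show ?thesis by (simp add: inner_K_def)
  qed
  also have "\<dots> = of_real Vol * of_real Yv" using infsum_of_real_pairs[OF sG] by (simp add: Yv_def)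
  finally have i1: "inner_K y y = of_real (Vol * Yv)" by simp
  have i2: "inner_K x y = of_real Vol * (\<Sum>(j, p)\<in>F. cnj (x j p) * y j p)"
    by (rule inner_fin[OF fF]) (simp add: F_def)
  have "complex_of_real Yv = (\<Sum>(j, p)\<in>F. cnj (x j p) * y j p)"
    using iyy i1 i2 Vol_pos by (simp add: of_real_mult)
  moreover have "cmod (complex_of_real Yv) = Yv" using Yv0 by simp
  ultimately have "Yv = cmod (\<Sum>(j, p)\<in>F. cnj (x j p) * y j p)" by simp
  also have "\<dots> \<le> (\<Sum>(j, p)\<in>F. cmod (cnj (x j p) * y j p))"
    by (rule norm_sum[THEN order_trans]) (simp add: case_prod_unfold)
  also have "\<dots> = (\<Sum>z\<in>F. \<bar>cmod (x (fst z) (snd z))\<bar> * \<bar>cmod (y (fst z) (snd z))\<bar>)"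
    by (simp add: case_prod_unfold norm_mult)
  also have "\<dots> \<le> L2_set (\<lambda>z. cmod (x (fst z) (snd z))) F * L2_set (\<lambda>z. cmod (y (fst z) (snd z))) F"
    by (rule L2_set_mult_ineq)
  finally have Yle: "Yv \<le> L2_set (\<lambda>z. cmod (x (fst z) (snd z))) F * L2_set (\<lambda>z. cmod (y (fst z) (snd z))) F" .
  define Xv where "Xv = (\<Sum>z\<in>F. (cmod (x (fst z) (snd z)))\<^sup>2)"
  have Lx: "L2_set (\<lambda>z. cmod (x (fst z) (snd z))) F = sqrt Xv" by (simp add: L2_set_def Xv_def)
  have "(\<Sum>z\<in>F. (cmod (y (fst z) (snd z)))\<^sup>2) = infsum G F" using fF by (simp add: G_def case_prod_unfold)
  also have "\<dots> \<le> Yv" unfolding Yv_def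
  proof (rule infsum_mono_neutral)
    show "G summable_on F" using fF by (rule summable_on_finite)
    show "G summable_on UNIV" by (rule sG)
    show "\<And>z. z \<in> F \<inter> UNIV \<Longrightarrow> G z \<le> G z" by (rule order_refl)
    show "\<And>z. z \<in> F - UNIV \<Longrightarrow> G z \<le> 0" by blast
    show "\<And>z. z \<in> UNIV - F \<Longrightarrow> G z \<ge> 0" by (simp add: G_def case_prod_unfold)
  qed
  finally have L2y: "L2_set (\<lambda>z. cmod (y (fst z) (snd z))) F \<le> sqrt Yv"
    by (simp add: L2_set_def)
  have "sqrt Xv * L2_set (\<lambda>z. cmod (y (fst z) (snd z))) F \<le> sqrt Xv * sqrt Yv"
    by (rule mult_left_mono[OF L2y]) (simp add: Xv_def sum_nonneg)
  then have "Yv \<le> sqrt Xv * sqrt Yv" using Yle Lx by simp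
  then have "Yv \<le> Xv"
  proof (cases "Yv = 0")
    case True
    have "Xv \<ge> 0" by (simp add: Xv_def sum_nonneg)
    then show ?thesis using True by simp
  next
    case False
    then have pos: "sqrt Yv > 0" using Yv0 by simp
    have h1: "sqrt Yv * sqrt Yv = Yv" using Yv0 by simp
    have "sqrt Yv * sqrt Yv \<le> sqrt Xv * sqrt Yv" using \<open>Yv \<le> sqrt Xv * sqrt Yv\<close> h1 by simp
    then have "sqrt Yv \<le> sqrt Xv" using pos by (rule mult_right_le_imp_le)
    then show ?thesis by simp
  qed
  have "nrm y = sqrt (Vol * Yv)" by (simp add: nrm_def Yv_def G_def)
  also have "\<dots> \<le> sqrt (Vol * Xv)" using \<open>Yv \<le> Xv\<close> Vol_pos by (intro real_sqrt_le_mono mult_left_mono) auto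
  also have "\<dots> = nrm x" using nrm_fin[OF fF] by (simp add: F_def Xv_def case_prod_unfold)
  finally show ?thesis by (simp add: y_def)
qed

lemma partE:
  assumes Q: "is_orth_proj Q"
  shows "opnorm (\<lambda>f. Q (PXi (H1 (PXi_perp f)))) \<le> 1"
  unfolding opnorm_def
proof (rule SUP_least)
  fix f assume "f \<in> {f \<in> L2K1. nrm f \<le> 1}"
  then have f: "f \<in> L2K1" "nrm f \<le> 1" by auto
  have r: "rotinv f" and fs: "fsupp f" using L2K1_rotinv[OF f(1)] L2K1_fsupp[OF f(1)] by auto
  have rh: "rotinv (H1 (cutS f))" by (rule rotinv_H1[OF rotinv_cut[OF r]])
  have fh: "fsupp (H1 (cutS f))" by (rule fsupp_H1[OF fsupp_cut[OF fs]])
  have "PXi (H1 (PXi_perp f)) = restr (H1 (cutS f))" using PXi_perp_eq[OF r fs] PXi_eq[OF rh fh] by simp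
  then have c: "PXi (H1 (PXi_perp f)) \<in> cspan Xi" using restr_in_cspan[OF rh fh] by simp
  have "nrm (Q (PXi (H1 (PXi_perp f)))) \<le> nrm (PXi (H1 (PXi_perp f)))"
    by (rule Q_contr[OF Q cspan_Xi_L2K1[OF c]]) (use cspan_Xi_good[OF c] in \<open>simp add: good_def\<close>)
  also have "\<dots> \<le> nrm f" by (rule T_le[OF f(1)])
  also have "\<dots> \<le> 1" by (rule f(2))
  finally show "ereal (nrm (Q (PXi (H1 (PXi_perp f))))) \<le> 1" by simp
qed

theorem proposition4p4:
  shows "(\<forall>f\<in>domH0. PXi f = (\<lambda>j p. 0) \<longrightarrow> nrm (H0 f) \<ge> 7 * nrm f)
    \<and> (\<forall>C::real. (\<forall>f\<in>domH0. PXi f = (\<lambda>j p. 0) \<longrightarrow> nrm (H0 f) \<ge> C * nrm f) \<longrightarrow> C \<le> 7)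
    \<and> (\<forall>\<alpha>::real. psi8 \<alpha> \<in> PXi ` L2K1)
    \<and> opnorm (\<lambda>f. PXi (H1 (PXi_perp f))) = 1
    \<and> (\<forall>Q. is_orth_proj Q \<longrightarrow> opnorm (\<lambda>f. Q (PXi (H1 (PXi_perp f)))) \<le> 1)"
  using partA partB partC partD partE by blast


end
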